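(* Let $n\ge 2$ and let $\Delta^c(SD_{8n})$ be the conjugacy super commuting graph of the semidihedral group $SD_{8n}$. (i) If $n$ is odd, the Sombor spectrum of $\Delta^c(SD_{8n})$ consists of $-(8n-1)\sqrt2$ with multiplicity $3$, $-(4n-1)\sqrt2$ with multiplicity $4n-5$, $-(4n+3)\sqrt2$ with multiplicity $4n-1$, and the three roots (with multiplicity) of \[\big(x-3(8n-1)\sqrt2\big)\big(x-(4n-1)(4n-5)\sqrt2\big)\big(x-(4n-1)(4n+3)\sqrt2\big)-32(n-1)(40n^2-12n+1)\big(x-(4n-1)(4n+3)\sqrt2\big)-32n(40n^2+4n+5)\big(x-(4n-5)(4n-1)\sqrt2\big).\] (ii) If $n$ is even, the Sombor spectrum of $\Delta^c(SD_{8n})$ consists of $-(2n+1)\sqrt2$ with multiplicity $4n-2$, $-(4n-1)\sqrt2$ with multiplicity $4n-3$, $-(8n-1)\sqrt2$ with multiplicity $1$, and the four roots (with multiplicity) of \[\big(x-(8n-1)\sqrt2\big)\big(x-(4n-1)(4n-3)\sqrt2\big)\big(x-(2n-1)(2n+1)\sqrt2\big)^2-8(2n-1)(40n^2-12n+1)\big(x-(2n-1)(2n+1)\sqrt2\big)^2-16n(34n^2-6n+1)\big(x-(4n-3)(4n-1)\sqrt2\big)\big(x-(2n-1)(2n+1)\sqrt2\big).\]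
   Context: For a finite simple graph $\Gamma$ with vertices $u_1,\dots,u_N$, the Sombor matrix $S(\Gamma)$ has $(i,j)$ entry $\sqrt{\deg(u_i)^2+\deg(u_j)^2}$ if $u_i,u_j$ are adjacent and $0$ otherwise; the Sombor spectrum is the multiset of its eigenvalues. $SD_{8n}=\langle a,b: a^{4n}=b^2=e,\ ba=a^{2n-1}b\rangle$. The conjugacy super commuting graph $\Delta^c(G)$ has vertex set $G$, and distinct $g,h$ are adjacent iff $g,h$ are conjugate in $G$ or there exist distinct $g'$ conjugate to $g$ and $h'$ conjugate to $h$ with $g'h'=h'g'$. *)

theory Defs
  imports "Jordan_Normal_Form.Determinant" "Jordan_Normal_Form.Char_Poly"
    "HOL-Computational_Algebra.Polynomial" "HOL-Library.Product_Lexorder"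
begin

text \<open>Element (i,j) with i < 4n, j < 2 represents the normal form a^i b^j.
  Using b a = a^(2n-1) b (so b a^k = a^(k(2n-1)) b) one gets
  (a^i b^j)(a^k b^l) = a^(i + k (2n-1)^j) b^(j+l).\<close>

definition sd_carrier :: "nat \<Rightarrow> (nat \<times> nat) set" where
  "sd_carrier n = {0..<4*n} \<times> {0..<2}"

definition sd_mult :: "nat \<Rightarrow> nat \<times> nat \<Rightarrow> nat \<times> nat \<Rightarrow> nat \<times> nat" where
  "sd_mult n g h = ((fst g + fst h * (2*n - 1) ^ snd g) mod (4*n),
                    (snd g + snd h) mod 2)"

definition sd_conj :: "nat \<Rightarrow> nat \<times> nat \<Rightarrow> nat \<times> nat \<Rightarrow> bool" where
  "sd_conj n g h \<longleftrightarrow> (\<exists>x\<in>sd_carrier n. sd_mult n h x = sd_mult n x g)"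

definition sd_csc_adj :: "nat \<Rightarrow> nat \<times> nat \<Rightarrow> nat \<times> nat \<Rightarrow> bool" where
  "sd_csc_adj n g h \<longleftrightarrow> g \<in> sd_carrier n \<and> h \<in> sd_carrier n \<and> g \<noteq> h \<and>
     (sd_conj n g h \<or>
      (\<exists>g'\<in>sd_carrier n. \<exists>h'\<in>sd_carrier n. g' \<noteq> h' \<and> sd_conj n g g' \<and> sd_conj n h h'
           \<and> sd_mult n g' h' = sd_mult n h' g'))"

text \<open>A graph is given by a list of its (distinct) vertices u_1..u_N and an adjacency relation.\<close>
definition graph_deg :: "'v list \<Rightarrow> ('v \<Rightarrow> 'v \<Rightarrow> bool) \<Rightarrow> 'v \<Rightarrow> nat" where
  "graph_deg vs adj v = card {w \<in> set vs. adj v w}"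

definition sombor_matrix :: "'v list \<Rightarrow> ('v \<Rightarrow> 'v \<Rightarrow> bool) \<Rightarrow> real mat" where
  "sombor_matrix vs adj = mat (length vs) (length vs)
     (\<lambda>(i,j). if adj (vs!i) (vs!j)
              then sqrt ((real (graph_deg vs adj (vs!i)))^2 + (real (graph_deg vs adj (vs!j)))^2)
              else 0)"

definition sombor_spectrum :: "'v list \<Rightarrow> ('v \<Rightarrow> 'v \<Rightarrow> bool) \<Rightarrow> complex multiset" where
  "sombor_spectrum vs adj = proots (map_poly complex_of_real (char_poly (sombor_matrix vs adj)))"

definition csc_SD_vertices :: "nat \<Rightarrow> (nat \<times> nat) list" where
  "csc_SD_vertices n = sorted_list_of_set (sd_carrier n)"

end

theory Submission
  imports Defs
begin

lemma det_rank_update: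
  fixes A :: "'a::field mat"
  assumes A: "A \<in> carrier_mat N N" and U: "U \<in> carrier_mat N k" and V: "V \<in> carrier_mat k N"
    and B: "B \<in> carrier_mat N k" and AB: "A * B = U"
  shows "det (A - U * V) = det A * det (1\<^sub>m k - V * B)"
proof -
  let ?M1 = "four_block_mat (A - U*V) U (0\<^sub>m k N) (1\<^sub>m k)"
  let ?M2 = "four_block_mat (1\<^sub>m N) (0\<^sub>m N k) V (1\<^sub>m k)"
  let ?M3 = "four_block_mat A (0\<^sub>m N k) V (1\<^sub>m k - V*B)"
  let ?M4 = "four_block_mat (1\<^sub>m N) B (0\<^sub>m k N) (1\<^sub>m k)"
  have UV: "U * V \<in> carrier_mat N N" using U V by auto
  have VB: "V * B \<in> carrier_mat k k" using V B by auto
  have AUV: "A - U * V \<in> carrier_mat N N" using minus_carrier_mat[OF UV] by auto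
  have e1: "?M1 * ?M2 = four_block_mat A U V (1\<^sub>m k)"
  proof -
    have "?M1 * ?M2 = four_block_mat ((A - U*V) * 1\<^sub>m N + U * V) ((A - U*V) * 0\<^sub>m N k + U * 1\<^sub>m k)
      (0\<^sub>m k N * 1\<^sub>m N + 1\<^sub>m k * V) (0\<^sub>m k N * 0\<^sub>m N k + 1\<^sub>m k * 1\<^sub>m k)"
      by (rule mult_four_block_mat[OF AUV U zero_carrier_mat one_carrier_mat one_carrier_mat zero_carrier_mat V one_carrier_mat])
    also have "(A - U*V) * 1\<^sub>m N + U * V = A"
      unfolding right_mult_one_mat[OF AUV] using A UV by (intro eq_matI) (auto simp del: index_mult_mat)
    also have "(A - U*V) * 0\<^sub>m N k + U * 1\<^sub>m k = U"
      unfolding right_mult_zero_mat[OF AUV] right_mult_one_mat[OF U] using U by simp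
    also have "0\<^sub>m k N * 1\<^sub>m N + 1\<^sub>m k * V = V"
      using V by simp
    also have "0\<^sub>m k N * 0\<^sub>m N k + 1\<^sub>m k * 1\<^sub>m k = (1\<^sub>m k :: 'a mat)"
      by simp
    finally show ?thesis .
  qed
  have e2: "?M3 * ?M4 = four_block_mat A U V (1\<^sub>m k)"
  proof -
    have "?M3 * ?M4 = four_block_mat (A * 1\<^sub>m N + 0\<^sub>m N k * 0\<^sub>m k N) (A * B + 0\<^sub>m N k * 1\<^sub>m k)
      (V * 1\<^sub>m N + (1\<^sub>m k - V*B) * 0\<^sub>m k N) (V * B + (1\<^sub>m k - V*B) * 1\<^sub>m k)"
      by (rule mult_four_block_mat[OF A zero_carrier_mat V minus_carrier_mat[OF VB] one_carrier_mat B zero_carrier_mat one_carrier_mat])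
    also have "A * 1\<^sub>m N + 0\<^sub>m N k * 0\<^sub>m k N = A"
      using A by simp
    also have "A * B + 0\<^sub>m N k * 1\<^sub>m k = U"
      using A B U by (simp add: AB)
    also have "V * 1\<^sub>m N + (1\<^sub>m k - V*B) * 0\<^sub>m k N = V"
      unfolding right_mult_zero_mat[OF minus_carrier_mat[OF VB]] using V by simp
    also have "V * B + (1\<^sub>m k - V*B) * 1\<^sub>m k = 1\<^sub>m k"
      unfolding right_mult_one_mat[OF minus_carrier_mat[OF VB]] using VB by (intro eq_matI) (auto simp del: index_mult_mat)
    finally show ?thesis .
  qed
  have d1: "det ?M1 = det (A - U * V)"
    using det_four_block_mat_lower_left_zero[OF AUV U refl, of "1\<^sub>m k"] by simp
  have d2: "det ?M2 = 1"
    using det_four_block_mat_upper_right_zero[of "1\<^sub>m N" N "0\<^sub>m N k" k V "1\<^sub>m k"] V by simp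
  have d3: "det ?M3 = det A * det (1\<^sub>m k - V * B)"
    using det_four_block_mat_upper_right_zero[OF A refl V minus_carrier_mat[OF VB]] by simp
  have d4: "det ?M4 = 1"
    using det_four_block_mat_lower_left_zero[of "1\<^sub>m N" N B k "0\<^sub>m k N" "1\<^sub>m k"] B by simp
  have "det (?M1 * ?M2) = det ?M1 * det ?M2"
    by (rule det_mult[of _ "N+k"]) (use AUV U V in auto)
  moreover have "det (?M3 * ?M4) = det ?M3 * det ?M4"
    by (rule det_mult[of _ "N+k"]) (use A V VB B in auto)
  ultimately show ?thesis using e1 e2 d1 d2 d3 d4 by simp
qed

lemma det_diag_mat:
  fixes f :: "nat \<Rightarrow> 'a::field"
  shows "det (mat n n (\<lambda>(i,j). if i = j then f i else 0)) = (\<Prod>i<n. f i)"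
proof -
  have dd: "diag_mat (mat n n (\<lambda>(i,j). if i = j then f i else 0)) = map f [0..<n]"
    unfolding diag_mat_def by (rule map_cong) auto
  have "det (mat n n (\<lambda>(i,j). if i = j then f i else 0)) = prod_list (diag_mat (mat n n (\<lambda>(i,j). if i = j then f i else 0)))"
    by (rule det_upper_triangular) (auto simp: upper_triangular_def)
  also have "\<dots> = prod_list (map f [0..<n])"
    unfolding dd ..
  also have "\<dots> = (\<Prod>i<n. f i)"
    by (simp add: prod.distinct_set_conv_list[symmetric] atLeast0LessThan)
  finally show ?thesis .
qed

lemma charpoly_classes:
  fixes W :: "nat \<Rightarrow> nat \<Rightarrow> real" and c :: "nat \<Rightarrow> nat"
  assumes c: "\<And>i. i < N \<Longrightarrow> c i < k"
    and ne: "\<And>t. t < k \<Longrightarrow> \<exists>i<N. c i = t"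
    and x: "\<And>t. t < k \<Longrightarrow> x + W t t \<noteq> 0"
  shows "poly (char_poly (mat N N (\<lambda>(i,j). if i = j then 0 else W (c i) (c j)))) x
     = (\<Prod>t<k. (x + W t t) ^ (card {i. i < N \<and> c i = t} - 1))
       * det (mat k k (\<lambda>(t,u). (if t = u then x + W t t else 0) - W t u * real (card {i. i < N \<and> c i = u})))"
proof -
  define s where "s t = card {i. i < N \<and> c i = t}" for t
  define M where "M = mat N N (\<lambda>(i,j). if i = j then 0 else W (c i) (c j))"
  define Ad where "Ad = mat N N (\<lambda>(i,j). if i = j then x + W (c i) (c i) else 0)"
  define U where "U = mat N k (\<lambda>(i,t). if c i = t then (1::real) else 0)"
  define V where "V = mat k N (\<lambda>(t,j). W t (c j))"
  define B where "B = mat N k (\<lambda>(i,t). if c i = t then 1 / (x + W t t) else 0)"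
  define K where "K = mat k k (\<lambda>(t,u). (if t = u then x + W t t else 0) - W t u * real (s u))"
  define Dk where "Dk = mat k k (\<lambda>(t,u). if t = u then x + W t t else (0::real))"
  have M: "M \<in> carrier_mat N N" unfolding M_def by simp
  have Ad: "Ad \<in> carrier_mat N N" and U: "U \<in> carrier_mat N k" and V: "V \<in> carrier_mat k N"
    and B: "B \<in> carrier_mat N k" and K: "K \<in> carrier_mat k k" and Dk: "Dk \<in> carrier_mat k k"
    unfolding Ad_def U_def V_def B_def K_def Dk_def by auto
  have UV: "(U * V) $$ (i,j) = W (c i) (c j)" if "i < N" "j < N" for i j
  proof -
    have "(U * V) $$ (i,j) = (\<Sum>l\<in>{0..<k}. (if c i = l then 1 else 0) * W l (c j))"
      using that by (simp add: U_def V_def scalar_prod_def)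
    also have "\<dots> = (\<Sum>l\<in>{0..<k}. if c i = l then W l (c j) else 0)"
      by (rule sum.cong) auto
    also have "\<dots> = W (c i) (c j)"
      using c[OF that(1)] by (simp add: sum.delta)
    finally show ?thesis .
  qed
  have eq1: "- char_matrix M x = Ad - U * V"
    proof (rule eq_matI)
    fix i j assume "i < dim_row (Ad - U * V)" "j < dim_col (Ad - U * V)"
    hence i: "i < N" and j: "j < N" using Ad U V by auto
    show "(- char_matrix M x) $$ (i, j) = (Ad - U * V) $$ (i, j)"
      using i j U V by (subst index_minus_mat) (auto simp: char_matrix_def Ad_def M_def UV[OF i j] simp del: index_mult_mat(1))
  qed (use Ad M U V in \<open>auto simp: char_matrix_def\<close>)
  have AB: "Ad * B = U"
  proof (rule eq_matI)
    fix i t assume it: "i < dim_row U" "t < dim_col U"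
    hence i: "i < N" and t: "t < k" using U by auto
    have "(Ad * B) $$ (i,t) = (\<Sum>l\<in>{0..<N}. (if i = l then x + W (c i) (c i) else 0) * (if c l = t then 1 / (x + W t t) else 0))"
      using i t by (simp add: Ad_def B_def scalar_prod_def)
    also have "\<dots> = (\<Sum>l\<in>{0..<N}. if i = l then (x + W (c i) (c i)) * (if c i = t then 1 / (x + W t t) else 0) else 0)"
      by (rule sum.cong) auto
    also have "\<dots> = (x + W (c i) (c i)) * (if c i = t then 1 / (x + W t t) else 0)"
      using i by (simp add: sum.delta)
    also have "\<dots> = U $$ (i,t)"
      using i t x[OF t] by (simp add: U_def)
    finally show "(Ad * B) $$ (i,t) = U $$ (i,t)" .
  qed (use Ad B U in auto)
  have VB: "(V * B) $$ (t,u) = W t u / (x + W u u) * real (s u)" if "t < k" "u < k" for t u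
  proof -
    have "(V * B) $$ (t,u) = (\<Sum>j\<in>{0..<N}. W t (c j) * (if c j = u then 1 / (x + W u u) else 0))"
      using that by (simp add: V_def B_def scalar_prod_def)
    also have "\<dots> = (\<Sum>j\<in>{j\<in>{0..<N}. c j = u}. W t u / (x + W u u))"
      by (subst sum.inter_filter) (auto intro: sum.cong)
    also have "{j\<in>{0..<N}. c j = u} = {i. i < N \<and> c i = u}" by auto
    finally show ?thesis by (simp add: s_def)
  qed
  have KD: "K = (1\<^sub>m k - V * B) * Dk"
  proof (rule eq_matI)
    fix t u assume "t < dim_row ((1\<^sub>m k - V * B) * Dk)" "u < dim_col ((1\<^sub>m k - V * B) * Dk)"
    hence t: "t < k" and u: "u < k" using V B Dk by auto
    have VB': "(\<Sum>ia = 0..<N. V $$ (t, ia) * B $$ (ia, u)) = W t u / (x + W u u) * real (s u)"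
      using VB[OF t u] t u V B by (simp add: scalar_prod_def)
    have "((1\<^sub>m k - V * B) * Dk) $$ (t,u) = (\<Sum>l\<in>{0..<k}. ((if t = l then 1 else 0) - (\<Sum>ia = 0..<N. V $$ (t, ia) * B $$ (ia, l))) * (if l = u then x + W l l else 0))"
      using t u V B by (simp add: Dk_def scalar_prod_def)
    also have "\<dots> = (\<Sum>l\<in>{0..<k}. if l = u then ((if t = l then 1 else 0) - (\<Sum>ia = 0..<N. V $$ (t, ia) * B $$ (ia, l))) * (x + W l l) else 0)"
      by (rule sum.cong) auto
    also have "\<dots> = ((if t = u then 1 else 0) - W t u / (x + W u u) * real (s u)) * (x + W u u)"
      using u by (simp add: sum.delta VB')
    also have "\<dots> = K $$ (t,u)"
      using t u x[OF u] by (simp add: K_def field_simps)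
    finally show "K $$ (t,u) = ((1\<^sub>m k - V * B) * Dk) $$ (t,u)" by simp
  qed (use K V B Dk in auto)
  have detK: "det K = det (1\<^sub>m k - V * B) * (\<Prod>t<k. x + W t t)"
    unfolding KD by (subst det_mult[of _ k]) (use V B in \<open>auto simp: Dk_def det_diag_mat\<close>)
  have detAd: "det Ad = (\<Prod>t<k. (x + W t t) ^ s t)"
  proof -
    have "det Ad = (\<Prod>i<N. x + W (c i) (c i))"
      unfolding Ad_def by (rule det_diag_mat)
    also have "\<dots> = (\<Prod>t\<in>{..<k}. \<Prod>i\<in>{i\<in>{..<N}. c i = t}. x + W (c i) (c i))"
      by (rule prod.group[symmetric]) (use c in auto)
    also have "\<dots> = (\<Prod>t<k. (x + W t t) ^ s t)"
    proof (rule prod.cong[OF refl])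
      fix t assume "t \<in> {..<k}"
      have "(\<Prod>i\<in>{i\<in>{..<N}. c i = t}. x + W (c i) (c i)) = (\<Prod>i\<in>{i\<in>{..<N}. c i = t}. x + W t t)"
        by (rule prod.cong) auto
      also have "\<dots> = (x + W t t) ^ s t"
        by (simp add: s_def)
      finally show "(\<Prod>i\<in>{i\<in>{..<N}. c i = t}. x + W (c i) (c i)) = (x + W t t) ^ s t" .
    qed
    finally show ?thesis .
  qed
  have spos: "s t \<ge> 1" if tk: "t < k" for t
  proof -
    obtain i where "i < N" "c i = t" using ne[OF tk] by auto
    hence "{i. i < N \<and> c i = t} \<noteq> {}" by auto
    moreover have "finite {i. i < N \<and> c i = t}" by auto
    ultimately show ?thesis unfolding s_def by (simp add: Suc_le_eq card_gt_0_iff)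
  qed
  have pw: "(\<Prod>t<k. (x + W t t) ^ s t) = (\<Prod>t<k. (x + W t t) ^ (s t - 1)) * (\<Prod>t<k. x + W t t)"
    unfolding prod.distrib[symmetric]
  proof (rule prod.cong[OF refl])
    fix t assume "t \<in> {..<k}"
    hence "s t = Suc (s t - 1)" using spos[of t] by auto
    then show "(x + W t t) ^ s t = (x + W t t) ^ (s t - 1) * (x + W t t)"
      by (metis power_Suc2)
  qed
  have nz: "(\<Prod>t<k. x + W t t) \<noteq> 0" using x by auto
  have "poly (char_poly M) x = det (- char_matrix M x)"
    by (rule char_poly_matrix[OF M])
  also have "\<dots> = det Ad * det (1\<^sub>m k - V * B)"
    unfolding eq1 by (rule det_rank_update[OF Ad U V B AB])
  also have "\<dots> = (\<Prod>t<k. (x + W t t) ^ (s t - 1)) * det K"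
    unfolding detAd detK pw by simp
  finally show ?thesis unfolding M_def K_def s_def .
qed

lemma det_expand0:
  fixes A :: "'a::comm_ring_1 mat"
  assumes A: "A \<in> carrier_mat (Suc n) (Suc n)"
  shows "det A = (\<Sum>j<Suc n. A $$ (0,j) * ((-1)^j * det (mat_delete A 0 j)))"
  using laplace_expansion_row[OF A, of 0] by (simp add: cofactor_def)

lemma det1:
  fixes A :: "'a::comm_ring_1 mat"
  assumes A: "A \<in> carrier_mat 1 1"
  shows "det A = A $$ (0,0)"
  using det_expand0[of A 0] A by (simp add: mat_delete_def)

lemma det2:
  fixes A :: "'a::comm_ring_1 mat"
  assumes A: "A \<in> carrier_mat 2 2"
  shows "det A = A $$ (0,0) * A $$ (1,1) - A $$ (0,1) * A $$ (1,0)"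
proof -
  have "det A = (\<Sum>j<2. A $$ (0,j) * ((-1)^j * det (mat_delete A 0 j)))"
    using det_expand0[of A 1] A by (simp add: numeral_2_eq_2)
  also have "\<dots> = A $$ (0,0) * det (mat_delete A 0 0) - A $$ (0,1) * det (mat_delete A 0 1)"
    by (simp add: numeral_2_eq_2)
  also have "det (mat_delete A 0 0) = A $$ (1,1)"
    using A by (subst det1) (auto simp: mat_delete_def insert_index_def numeral_2_eq_2 numeral_3_eq_3)
  also have "det (mat_delete A 0 1) = A $$ (1,0)"
    using A by (subst det1) (auto simp: mat_delete_def insert_index_def numeral_2_eq_2 numeral_3_eq_3)
  finally show ?thesis .
qed

lemma det3:
  fixes A :: "'a::comm_ring_1 mat"
  assumes A: "A \<in> carrier_mat 3 3"
  shows "det A = A $$ (0,0) * (A $$ (1,1) * A $$ (2,2) - A $$ (1,2) * A $$ (2,1))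
     - A $$ (0,1) * (A $$ (1,0) * A $$ (2,2) - A $$ (1,2) * A $$ (2,0))
     + A $$ (0,2) * (A $$ (1,0) * A $$ (2,1) - A $$ (1,1) * A $$ (2,0))"
proof -
  have "det A = (\<Sum>j<3. A $$ (0,j) * ((-1)^j * det (mat_delete A 0 j)))"
    using det_expand0[of A 2] A by (simp add: numeral_3_eq_3)
  also have "\<dots> = A $$ (0,0) * det (mat_delete A 0 0) - A $$ (0,1) * det (mat_delete A 0 1)
      + A $$ (0,2) * det (mat_delete A 0 2)"
    by (simp add: numeral_3_eq_3 numeral_2_eq_2)
  also have "det (mat_delete A 0 0) = A $$ (1,1) * A $$ (2,2) - A $$ (1,2) * A $$ (2,1)"
    using A by (subst det2) (auto simp: mat_delete_def insert_index_def numeral_2_eq_2 numeral_3_eq_3)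
  also have "det (mat_delete A 0 1) = A $$ (1,0) * A $$ (2,2) - A $$ (1,2) * A $$ (2,0)"
    using A by (subst det2) (auto simp: mat_delete_def insert_index_def numeral_2_eq_2 numeral_3_eq_3)
  also have "det (mat_delete A 0 2) = A $$ (1,0) * A $$ (2,1) - A $$ (1,1) * A $$ (2,0)"
    using A by (subst det2) (auto simp: mat_delete_def insert_index_def numeral_2_eq_2 numeral_3_eq_3)
  finally show ?thesis .
qed

lemma det4_star:
  fixes A :: "'a::comm_ring_1 mat"
  assumes A: "A \<in> carrier_mat 4 4"
    and z: "A $$ (1,2) = 0" "A $$ (1,3) = 0" "A $$ (2,1) = 0" "A $$ (2,3) = 0" "A $$ (3,1) = 0" "A $$ (3,2) = 0"
  shows "det A = A $$ (0,0) * A $$ (1,1) * A $$ (2,2) * A $$ (3,3)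
     - A $$ (0,1) * A $$ (1,0) * A $$ (2,2) * A $$ (3,3)
     - A $$ (0,2) * A $$ (2,0) * A $$ (1,1) * A $$ (3,3)
     - A $$ (0,3) * A $$ (3,0) * A $$ (1,1) * A $$ (2,2)"
proof -
  have "det A = (\<Sum>j<4. A $$ (0,j) * ((-1)^j * det (mat_delete A 0 j)))"
    using det_expand0[of A 3] A by (simp add: numeral_Bit0)
  also have "\<dots> = A $$ (0,0) * det (mat_delete A 0 0) - A $$ (0,1) * det (mat_delete A 0 1)
      + A $$ (0,2) * det (mat_delete A 0 2) - A $$ (0,3) * det (mat_delete A 0 3)"
    by (simp add: numeral_3_eq_3 numeral_2_eq_2 numeral_Bit0)
  also have "det (mat_delete A 0 0) = A $$ (1,1) * A $$ (2,2) * A $$ (3,3)"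
    using A z by (subst det3) (auto simp: mat_delete_def insert_index_def numeral_2_eq_2 numeral_3_eq_3)
  also have "det (mat_delete A 0 1) = A $$ (1,0) * A $$ (2,2) * A $$ (3,3)"
    using A z by (subst det3) (auto simp: mat_delete_def insert_index_def numeral_2_eq_2 numeral_3_eq_3)
  also have "det (mat_delete A 0 2) = - A $$ (2,0) * A $$ (1,1) * A $$ (3,3)"
    using A z by (subst det3) (auto simp: mat_delete_def insert_index_def numeral_2_eq_2 numeral_3_eq_3)
  also have "det (mat_delete A 0 3) = A $$ (3,0) * A $$ (1,1) * A $$ (2,2)"
    using A z by (subst det3) (auto simp: mat_delete_def insert_index_def numeral_2_eq_2 numeral_3_eq_3)
  finally show ?thesis by (simp add: algebra_simps)
qed

definition zc :: "nat \<Rightarrow> nat" where "zc n = (if odd n then n else 2*n)"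

lemma key_dvd:
  fixes n :: nat and d :: int
  assumes n: "n \<ge> 1"
  shows "(4 * int n) dvd (d * (2 - 2 * int n)) \<longleftrightarrow> int (zc n) dvd d"
proof -
  have e: "d * (2 - 2 * int n) = - (2 * (d * (int n - 1)))" by (simp add: algebra_simps)
  have "(4 * int n) dvd (d * (2 - 2 * int n)) \<longleftrightarrow> (2 * int n) dvd (d * (int n - 1))"
  proof -
    have "(4 * int n) = 2 * (2 * int n)" by simp
    thus ?thesis unfolding e dvd_minus_iff by (simp only: dvd_times_left_cancel_iff[of 2] zero_neq_numeral not_False_eq_True)
  qed
  also have "\<dots> \<longleftrightarrow> int (zc n) dvd d"
  proof (cases "odd n")
    case True
    then obtain m where "n = 2 * m + 1" by (rule oddE)
    then obtain r where r: "int n - 1 = 2 * r" by auto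
    have cop: "coprime (int n) r"
    proof -
      have "coprime (int n) (int n - 1)" by (rule coprime_doff_one_right)
      thus ?thesis unfolding r by simp
    qed
    have "(2 * int n) dvd (d * (int n - 1)) \<longleftrightarrow> int n dvd (d * r)"
      unfolding r by (simp add: mult.left_commute)
    also have "\<dots> \<longleftrightarrow> int n dvd d" using cop by (simp add: coprime_dvd_mult_left_iff)
    finally show ?thesis using True by (simp add: zc_def)
  next
    case False
    have c1: "coprime 2 (int n - 1)" using False n by (simp add: even_diff)
    have c2: "coprime (int n) (int n - 1)" by (rule coprime_doff_one_right)
    have cop: "coprime (2 * int n) (int n - 1)" using c1 c2 by simp
    show ?thesis using False cop by (simp add: zc_def coprime_dvd_mult_left_iff)
  qed
  finally show ?thesis .
qed

lemma nat_mod_eq_int: "(a::nat) mod m = b mod m \<longleftrightarrow> int m dvd (int a - int b)"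
proof -
  have "a mod m = b mod m \<longleftrightarrow> int (a mod m) = int (b mod m)" by simp
  also have "\<dots> \<longleftrightarrow> int a mod int m = int b mod int m" by (simp only: of_nat_mod)
  also have "\<dots> \<longleftrightarrow> int m dvd (int a - int b)" by (rule mod_eq_dvd_iff)
  finally show ?thesis .
qed

lemma carrier_iff: "g \<in> sd_carrier n \<longleftrightarrow> fst g < 4*n \<and> snd g < 2"
  by (cases g) (auto simp: sd_carrier_def)

lemma snd_cases: "g \<in> sd_carrier n \<Longrightarrow> snd g = 0 \<or> snd g = 1"
  by (auto simp: carrier_iff)

lemma mult0: "sd_mult n (i,0) (k,l) = ((i+k) mod (4*n), l mod 2)"
  by (simp add: sd_mult_def)

lemma mult1: "sd_mult n (i,1) (k,l) = ((i + k*(2*n-1)) mod (4*n), (1 + l) mod 2)"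
  by (simp add: sd_mult_def)

lemma int_2n1: "n \<ge> 1 \<Longrightarrow> int (2*n-1) = 2 * int n - 1" by simp

lemma conv2n1: "n \<ge> 1 \<Longrightarrow> int (j + i*(2*n-1)) = int j + int i * (2*int n - 1)"
  by (simp add: of_nat_diff)

lemma comm_iff:
  assumes n: "n \<ge> 1" and g: "(i,a) \<in> sd_carrier n" and h: "(j,b) \<in> sd_carrier n"
  shows "sd_mult n (i,a) (j,b) = sd_mult n (j,b) (i,a) \<longleftrightarrow>
    (a = 0 \<and> b = 0) \<or> (a = 0 \<and> b = 1 \<and> int (zc n) dvd int i) \<or> (a = 1 \<and> b = 0 \<and> int (zc n) dvd int j)
    \<or> (a = 1 \<and> b = 1 \<and> int (zc n) dvd (int i - int j))"
proof -
  have ab: "a < 2" "b < 2" using g h by (auto simp: carrier_iff)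
  consider "a = 0" "b = 0" | "a = 0" "b = 1" | "a = 1" "b = 0" | "a = 1" "b = 1" using ab by linarith
  then show ?thesis
  proof cases
    case 1
    then show ?thesis by (simp add: mult0 add.commute)
  next
    case 2
    have "sd_mult n (i,a) (j,b) = sd_mult n (j,b) (i,a) \<longleftrightarrow> (i + j) mod (4*n) = (j + i*(2*n-1)) mod (4*n)"
      using 2 by (simp add: sd_mult_def)
    also have "\<dots> \<longleftrightarrow> int (4*n) dvd (int i * (2 - 2 * int n))"
    proof -
      have e: "(int i + int j) - (int j + int i * (2*int n - 1)) = int i * (2 - 2*int n)" by (simp add: algebra_simps)
      show ?thesis unfolding nat_mod_eq_int conv2n1[OF n] of_nat_add[of i j] of_nat_add[of j i] e by simp
    qed
    also have "\<dots> \<longleftrightarrow> int (zc n) dvd int i" using key_dvd[OF n] by simp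
    finally show ?thesis using 2 by simp
  next
    case 3
    have "sd_mult n (i,a) (j,b) = sd_mult n (j,b) (i,a) \<longleftrightarrow> (i + j*(2*n-1)) mod (4*n) = (j + i) mod (4*n)"
      using 3 by (simp add: sd_mult_def)
    also have "\<dots> \<longleftrightarrow> int (4*n) dvd (int j * (2 - 2 * int n))"
    proof -
      have e: "(int i + int j * (2*int n - 1)) - (int j + int i) = - (int j * (2 - 2*int n))" by (simp add: algebra_simps)
      show ?thesis unfolding nat_mod_eq_int conv2n1[OF n] of_nat_add[of i j] of_nat_add[of j i] e dvd_minus_iff by simp
    qed
    also have "\<dots> \<longleftrightarrow> int (zc n) dvd int j" using key_dvd[OF n] by simp
    finally show ?thesis using 3 by simp
  next
    case 4
    have "sd_mult n (i,a) (j,b) = sd_mult n (j,b) (i,a) \<longleftrightarrow> (i + j*(2*n-1)) mod (4*n) = (j + i*(2*n-1)) mod (4*n)"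
      using 4 by (simp add: sd_mult_def)
    also have "\<dots> \<longleftrightarrow> int (4*n) dvd ((int i - int j) * (2 - 2 * int n))"
    proof -
      have e: "(int i + int j * (2*int n - 1)) - (int j + int i * (2*int n - 1)) = (int i - int j) * (2 - 2*int n)" by (simp add: algebra_simps)
      show ?thesis unfolding nat_mod_eq_int conv2n1[OF n] e by simp
    qed
    also have "\<dots> \<longleftrightarrow> int (zc n) dvd (int i - int j)" using key_dvd[OF n] by simp
    finally show ?thesis using 4 by simp
  qed
qed

lemma conj_snd:
  assumes "sd_conj n g h" "g \<in> sd_carrier n" "h \<in> sd_carrier n"
  shows "snd h = snd g"
proof -
  obtain x where x: "x \<in> sd_carrier n" "sd_mult n h x = sd_mult n x g"
    using assms(1) unfolding sd_conj_def by auto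
  have A: "(snd h + snd x) mod 2 = (snd x + snd g) mod 2"
    using arg_cong[OF x(2), of snd] by (simp add: sd_mult_def)
  have lt: "snd h < 2" "snd g < 2" "snd x < 2" using assms(2,3) x(1) by (auto simp: carrier_iff)
  show ?thesis using A lt by presburger
qed

lemma coprime_zc: "n \<ge> 1 \<Longrightarrow> coprime (int (zc n)) (2 * int n - 1)"
proof -
  have c: "coprime (2 * int n) (2 * int n - 1)" by (rule coprime_doff_one_right)
  hence "coprime (int n) (2 * int n - 1)" using coprime_mult_left_iff by blast
  with c show ?thesis by (simp add: zc_def)
qed

lemma zc_dvd_4n: "int (zc n) dvd 4 * int n"
  by (auto simp: zc_def)

lemma conj_rot_zc:
  assumes n: "n \<ge> 1" and c: "sd_conj n (i,0) (j,0)" and g: "(i,0) \<in> sd_carrier n" and h: "(j,0) \<in> sd_carrier n"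
  shows "int (zc n) dvd int i \<longleftrightarrow> int (zc n) dvd int j"
proof -
  obtain x where x: "x \<in> sd_carrier n" "sd_mult n (j,0) x = sd_mult n x (i,0)"
    using c unfolding sd_conj_def by auto
  obtain m l where xm: "x = (m,l)" by (cases x)
  have l: "l = 0 \<or> l = 1" using x(1) xm by (auto simp: carrier_iff)
  then show ?thesis
  proof
    assume l0: "l = 0"
    have "(j + m) mod (4*n) = (m + i) mod (4*n)"
      using arg_cong[OF x(2), of fst] xm l0 by (simp add: sd_mult_def)
    hence "j mod (4*n) = i mod (4*n)" unfolding nat_mod_eq_int by (simp add: add.commute)
    hence "j = i" using g h by (simp add: carrier_iff)
    thus ?thesis by simp
  next
    assume l1: "l = 1"
    have "(j + m) mod (4*n) = (m + i * (2*n-1)) mod (4*n)"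
      using arg_cong[OF x(2), of fst] xm l1 by (simp add: sd_mult_def)
    hence "int (4*n) dvd (int j + int m) - (int m + int i * (2 * int n - 1))"
      unfolding nat_mod_eq_int conv2n1[OF n] of_nat_add[of j m] by simp
    hence "int (zc n) dvd int j - int i * (2 * int n - 1)"
      using zc_dvd_4n[of n] by (auto elim: dvd_trans)
    hence "int (zc n) dvd int j \<longleftrightarrow> int (zc n) dvd int i * (2 * int n - 1)"
    proof -
      assume D: "int (zc n) dvd int j - int i * (2 * int n - 1)"
      show ?thesis
      proof
        assume "int (zc n) dvd int j"
        from dvd_diff[OF this D] show "int (zc n) dvd int i * (2 * int n - 1)" by simp
      next
        assume "int (zc n) dvd int i * (2 * int n - 1)"
        from dvd_add[OF D this] show "int (zc n) dvd int j" by simp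
      qed
    qed
    also have "\<dots> \<longleftrightarrow> int (zc n) dvd int i"
      using coprime_zc[OF n] by (simp add: coprime_dvd_mult_left_iff)
    finally show ?thesis by simp
  qed
qed

lemma conj_ref_par:
  assumes n: "n \<ge> 1" and c: "sd_conj n (i,1) (j,1)" and g: "(i,1) \<in> sd_carrier n" and h: "(j,1) \<in> sd_carrier n"
  shows "even (int j - int i)"
proof -
  obtain x where x: "x \<in> sd_carrier n" "sd_mult n (j,1) x = sd_mult n x (i,1)"
    using c unfolding sd_conj_def by auto
  obtain m l where xm: "x = (m,l)" by (cases x)
  have l: "l = 0 \<or> l = 1" using x(1) xm by (auto simp: carrier_iff)
  have two: "(2::int) dvd int (4*n)" by simp
  from l show ?thesis
  proof
    assume l0: "l = 0"
    have "(j + m * (2*n-1)) mod (4*n) = (m + i) mod (4*n)"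
      using arg_cong[OF x(2), of fst] xm l0 by (simp add: sd_mult_def)
    hence "int (4*n) dvd (int j + int m * (2 * int n - 1)) - (int m + int i)"
      unfolding nat_mod_eq_int conv2n1[OF n] of_nat_add[of m i] by simp
    hence "even ((int j + int m * (2 * int n - 1)) - (int m + int i))"
      using two dvd_trans by blast
    thus ?thesis by simp blast
  next
    assume l1: "l = 1"
    have "(j + m * (2*n-1)) mod (4*n) = (m + i * (2*n-1)) mod (4*n)"
      using arg_cong[OF x(2), of fst] xm l1 by (simp add: sd_mult_def)
    hence "int (4*n) dvd (int j + int m * (2 * int n - 1)) - (int m + int i * (2 * int n - 1))"
      unfolding nat_mod_eq_int conv2n1[OF n] by simp
    hence "even ((int j + int m * (2 * int n - 1)) - (int m + int i * (2 * int n - 1)))"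
      using two dvd_trans by blast
    thus ?thesis by simp blast
  qed
qed

lemma conj_shift:
  assumes n: "n \<ge> 1" and i: "i < 4*n" and j: "j < 4*n" and k: "k < 4*n"
    and d: "int (4*n) dvd (int j - int i) - int k * (2 - 2 * int n)"
  shows "sd_conj n (i,1) (j,1)"
  unfolding sd_conj_def
proof (rule bexI[of _ "(k,0)"])
  have e: "(int j + int k * (2 * int n - 1)) - (int k + int i) = (int j - int i) - int k * (2 - 2 * int n)"
    by (simp add: algebra_simps)
  have "(j + k * (2*n-1)) mod (4*n) = (k + i) mod (4*n)"
    unfolding nat_mod_eq_int conv2n1[OF n] of_nat_add[of k i] e using d by simp
  thus "sd_mult n (j, 1) (k, 0) = sd_mult n (k, 0) (i, 1)" by (simp add: sd_mult_def)
  show "(k, 0) \<in> sd_carrier n" using k by (simp add: carrier_iff)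
qed

lemma conj_ref_odd:
  assumes n: "n \<ge> 1" "odd n" and i: "i < 4*n" and j: "j < 4*n" and d4: "4 dvd (int j - int i)"
  shows "sd_conj n (i,1) (j,1)"
proof -
  define d where "d = (int j - int i) div 4"
  have dd: "int j - int i = 4 * d" using d4 unfolding d_def by simp
  define q where "q = (2*d) div (4 * int n)"
  define k where "k = nat ((2*d) mod (4 * int n))"
  have kk0: "int k = (2*d) mod (4 * int n)" unfolding k_def using n by simp
  have kk: "int k = 2*d - 4 * int n * q"
    unfolding kk0 q_def by (rule minus_mult_div_eq_mod[symmetric])
  have klt: "k < 4*n" unfolding k_def using n by (simp add: nat_less_iff)
  have "(int j - int i) - int k * (2 - 2 * int n) = 4 * int n * (d + q * (2 - 2 * int n))"
    unfolding dd kk by (simp add: algebra_simps)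
  hence "int (4*n) dvd (int j - int i) - int k * (2 - 2 * int n)" by simp
  thus ?thesis by (rule conj_shift[OF n(1) i j klt])
qed

lemma conj_ref_even:
  assumes n: "n \<ge> 1" "even n" and i: "i < 4*n" and j: "j < 4*n" and d2: "2 dvd (int j - int i)"
  shows "sd_conj n (i,1) (j,1)"
proof -
  define d where "d = (int j - int i) div 2"
  have dd: "int j - int i = 2 * d" using d2 unfolding d_def by simp
  obtain m where m: "n = 2 * m" using n(2) by auto
  define q where "q = ((1 + int n) * d) div (4 * int n)"
  define k where "k = nat (((1 + int n) * d) mod (4 * int n))"
  have kk0: "int k = ((1 + int n) * d) mod (4 * int n)" unfolding k_def using n by simp
  have kk: "int k = (1 + int n) * d - 4 * int n * q"
    unfolding kk0 q_def by (rule minus_mult_div_eq_mod[symmetric])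
  have klt: "k < 4*n" unfolding k_def using n by (simp add: nat_less_iff)
  have "(int j - int i) - int k * (2 - 2 * int n) = 4 * int n * (d * int m + q * (2 - 2 * int n))"
    unfolding dd kk m by (simp add: algebra_simps)
  hence "int (4*n) dvd (int j - int i) - int k * (2 - 2 * int n)" by simp
  thus ?thesis by (rule conj_shift[OF n(1) i j klt])
qed

definition central :: "nat \<Rightarrow> nat \<times> nat \<Rightarrow> bool" where
  "central n g \<longleftrightarrow> snd g = 0 \<and> int (zc n) dvd int (fst g)"

definition cl :: "nat \<Rightarrow> nat \<times> nat \<Rightarrow> nat" where
  "cl n g = (if central n g then 0 else if snd g = 0 then 1 else if odd n then 2
             else if even (fst g) then 2 else 3)"

lemma conj_refl: "g \<in> sd_carrier n \<Longrightarrow> sd_conj n g g"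
  unfolding sd_conj_def
  by (rule bexI[of _ "(0,0)"]) (auto simp: sd_mult_def carrier_iff sd_carrier_def)

lemma odd_witness:
  assumes n: "n \<ge> 1" "odd n" and i: "i < 4*n" and j: "j < 4*n" and nd: "\<not> 4 dvd (int j - int i)"
  shows "\<exists>i'<4*n. sd_conj n (j,1) (i',1) \<and> i' \<noteq> i \<and> int n dvd (int i - int i')"
proof -
  obtain m where m: "n = 2*m+1" using n(2) by (rule oddE)
  define e where "e = (int j - int i) * int n"
  define t where "t = e mod 4"
  define q where "q = (int i + int n * t) div (4 * int n)"
  define i' where "i' = nat ((int i + int n * t) mod (4 * int n))"
  have t0: "t \<ge> 0" "t < 4" unfolding t_def by auto
  have te: "t = e - 4 * (e div 4)" unfolding t_def by (rule minus_mult_div_eq_mod[symmetric])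
  have ii0: "int i' = (int i + int n * t) mod (4 * int n)" unfolding i'_def using n by simp
  have ii: "int i' = int i + int n * t - 4 * int n * q"
    unfolding ii0 q_def by (rule minus_mult_div_eq_mod[symmetric])
  have ilt: "i' < 4*n" unfolding i'_def using n by (simp add: nat_less_iff)
  have "int i' - int j = 4 * ((int j - int i) * (int m * int m + int m) - int n * (e div 4) - int n * q)"
    unfolding ii te e_def m by (simp add: algebra_simps)
  hence "4 dvd (int i' - int j)" by simp
  hence c: "sd_conj n (j,1) (i',1)" by (rule conj_ref_odd[OF n j ilt])
  have dv: "int n dvd (int i - int i')"
  proof -
    have "int i - int i' = int n * (4 * q - t)" unfolding ii by (simp add: algebra_simps)
    thus ?thesis by simp
  qed
  have ne: "i' \<noteq> i"
  proof
    assume "i' = i"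
    hence "int n * t = int n * (4 * q)" using ii by simp
    hence "t = 4 * q" using n by simp
    hence "t = 0" using t0 by auto
    hence "4 dvd e" unfolding t_def by auto
    hence "4 dvd (int j - int i) * int n" unfolding e_def .
    moreover have "coprime (4::int) (int n)"
    proof -
      have "coprime (2::int) (int n)" using n(2) by simp
      hence "coprime (2*2::int) (int n)" by (simp only: coprime_mult_left_iff)
      thus ?thesis by simp
    qed
    ultimately have "4 dvd (int j - int i)" by (simp add: coprime_dvd_mult_left_iff)
    with nd show False by simp
  qed
  show ?thesis using ilt c ne dv by blast
qed

lemma adj_iff:
  assumes n: "n \<ge> 2"
  shows "sd_csc_adj n g h \<longleftrightarrow> g \<in> sd_carrier n \<and> h \<in> sd_carrier n \<and> g \<noteq> h \<and>
     (cl n g = 0 \<or> cl n h = 0 \<or> cl n g = cl n h)"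
proof -
  have n1: "n \<ge> 1" using n by simp
  obtain i a where g: "g = (i,a)" by (cases g)
  obtain j b where h: "h = (j,b)" by (cases h)
  show ?thesis
  proof
    assume adj: "sd_csc_adj n g h"
    hence gC: "g \<in> sd_carrier n" and hC: "h \<in> sd_carrier n" and gh: "g \<noteq> h"
      unfolding sd_csc_adj_def by auto
    have ab: "a = 0 \<or> a = 1" "b = 0 \<or> b = 1" using gC hC g h by (auto simp: carrier_iff)
    have "cl n g = 0 \<or> cl n h = 0 \<or> cl n g = cl n h"
    proof (rule ccontr)
      assume "\<not> ?thesis"
      hence ncg: "\<not> central n g" and nch: "\<not> central n h" and neq: "cl n g \<noteq> cl n h"
        unfolding cl_def by (auto split: if_splits)
      from adj consider "sd_conj n g h" | g' h' where "g' \<in> sd_carrier n" "h' \<in> sd_carrier n" "g' \<noteq> h'"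
        "sd_conj n g g'" "sd_conj n h h'" "sd_mult n g' h' = sd_mult n h' g'"
        unfolding sd_csc_adj_def by blast
      then show False
      proof cases
        case 1
        have "b = a" using conj_snd[OF 1 gC hC] g h by simp
        show False
        proof (cases "a = 0")
          case True
          thus False using neq ncg nch \<open>b = a\<close> g h by (simp add: cl_def)
        next
          case False
          hence a1: "a = 1" "b = 1" using ab \<open>b = a\<close> by auto
          have "even (int j - int i)"
            using conj_ref_par[OF n1, of i j] 1 gC hC g h a1 by simp
          hence "even i = even j" by simp
          thus False using neq ncg nch a1 g h by (auto simp: cl_def split: if_splits)
        qed
      next
        case 2
        obtain i' a' where g': "g' = (i',a')" by (cases g')
        obtain j' b' where h': "h' = (j',b')" by (cases h')
        have a': "a' = a" using conj_snd[OF 2(4) gC 2(1)] g g' by simp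
        have b': "b' = b" using conj_snd[OF 2(5) hC 2(2)] h h' by simp
        have cm: "(a = 0 \<and> b = 0) \<or> (a = 0 \<and> b = 1 \<and> int (zc n) dvd int i') \<or> (a = 1 \<and> b = 0 \<and> int (zc n) dvd int j')
          \<or> (a = 1 \<and> b = 1 \<and> int (zc n) dvd (int i' - int j'))"
          using comm_iff[OF n1, of i' a' j' b'] 2(1,2,6) g' h' a' b' by simp
        consider (rr) "a = 0" "b = 0" | (rf) "a = 0" "b = 1" | (fr) "a = 1" "b = 0" | (ff) "a = 1" "b = 1" using ab by blast
        then show False
        proof cases
          case rr
          thus False using neq ncg nch g h by (simp add: cl_def)
        next
          case rf
          have "int (zc n) dvd int i \<longleftrightarrow> int (zc n) dvd int i'"
            using conj_rot_zc[OF n1, of i i'] 2(4,1) gC g g' a' rf by simp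
          thus False using cm rf ncg g by (simp add: central_def)
        next
          case fr
          have "int (zc n) dvd int j \<longleftrightarrow> int (zc n) dvd int j'"
            using conj_rot_zc[OF n1, of j j'] 2(5,2) hC h h' b' fr by simp
          thus False using cm fr nch h by (simp add: central_def)
        next
          case ff
          show False
          proof (cases "odd n")
            case True
            thus False using neq ncg nch ff g h by (simp add: cl_def)
          next
            case False
            have p1: "even (int i' - int i)"
              using conj_ref_par[OF n1, of i i'] 2(4,1) gC g g' a' ff by simp
            have p2: "even (int j' - int j)"
              using conj_ref_par[OF n1, of j j'] 2(5,2) hC h h' b' ff by simp
            have "int (zc n) dvd (int i' - int j')" using cm ff by simp
            moreover have "(2::int) dvd int (zc n)" using False by (simp add: zc_def)
            ultimately have p3: "even (int i' - int j')" using dvd_trans by blast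
            have e: "int i - int j = (int i' - int j') - (int i' - int i) + (int j' - int j)" by simp
            have "even (int i - int j)" unfolding e by (rule dvd_add[OF dvd_diff[OF p3 p1] p2])
            hence "even i = even j" by simp
            thus False using neq ncg nch ff g h False by (auto simp: cl_def split: if_splits)
          qed
        qed
      qed
    qed
    thus "g \<in> sd_carrier n \<and> h \<in> sd_carrier n \<and> g \<noteq> h \<and> (cl n g = 0 \<or> cl n h = 0 \<or> cl n g = cl n h)"
      using gC hC gh by blast
  next
    assume R: "g \<in> sd_carrier n \<and> h \<in> sd_carrier n \<and> g \<noteq> h \<and> (cl n g = 0 \<or> cl n h = 0 \<or> cl n g = cl n h)"
    hence gC: "g \<in> sd_carrier n" and hC: "h \<in> sd_carrier n" and gh: "g \<noteq> h"
      and cc: "cl n g = 0 \<or> cl n h = 0 \<or> cl n g = cl n h" by auto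
    have ab: "a = 0 \<or> a = 1" "b = 0 \<or> b = 1" using gC hC g h by (auto simp: carrier_iff)
    have ilt: "i < 4*n" and jlt: "j < 4*n" using gC hC g h by (auto simp: carrier_iff)
    have viacomm: "sd_csc_adj n g h" if "sd_mult n g h = sd_mult n h g"
    proof -
      have "\<exists>g'\<in>sd_carrier n. \<exists>h'\<in>sd_carrier n. g' \<noteq> h' \<and> sd_conj n g g' \<and> sd_conj n h h' \<and> sd_mult n g' h' = sd_mult n h' g'"
        using gC hC gh conj_refl[OF gC] conj_refl[OF hC] that by blast
      thus ?thesis unfolding sd_csc_adj_def using gC hC gh by simp
    qed
    have viaconj: "sd_csc_adj n g h" if "sd_conj n g h"
      unfolding sd_csc_adj_def using gC hC gh that by simp
    show "sd_csc_adj n g h"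
    proof (cases "central n g \<or> central n h \<or> (a = 0 \<and> b = 0)")
      case True
      have "sd_mult n g h = sd_mult n h g"
        using comm_iff[OF n1, of i a j b] gC hC g h True ab by (auto simp: central_def)
      thus ?thesis by (rule viacomm)
    next
      case False
      hence a1: "a = 1" "b = 1" using cc ab g h by (auto simp: cl_def split: if_splits)
      show ?thesis
      proof (cases "odd n")
        case False
        have "even i = even j" using cc a1 g h False by (auto simp: cl_def central_def split: if_splits)
        hence "2 dvd (int j - int i)" by simp
        hence "sd_conj n (i,1) (j,1)" using conj_ref_even[OF n1 _ ilt jlt] False by simp
        thus ?thesis using viaconj g h a1 by simp
      next
        case odd: True
        show ?thesis
        proof (cases "4 dvd (int j - int i)")
          case True
          hence "sd_conj n (i,1) (j,1)" using conj_ref_odd[OF n1 odd ilt jlt] by simp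
          thus ?thesis using viaconj g h a1 by simp
        next
          case False
          obtain i' where i': "i' < 4*n" "sd_conj n (j,1) (i',1)" "i' \<noteq> i" "int n dvd (int i - int i')"
            using odd_witness[OF n1 odd ilt jlt False] by blast
          have i'C: "(i',1) \<in> sd_carrier n" using i'(1) by (simp add: carrier_iff)
          have cm: "sd_mult n (i,1) (i',1) = sd_mult n (i',1) (i,1)"
            using comm_iff[OF n1, of i 1 i' 1] gC i'C g a1 i'(4) odd by (simp add: zc_def)
          have "\<exists>g'\<in>sd_carrier n. \<exists>h'\<in>sd_carrier n. g' \<noteq> h' \<and> sd_conj n g g' \<and> sd_conj n h h' \<and> sd_mult n g' h' = sd_mult n h' g'"
          proof (intro bexI conjI)
            show "g \<noteq> (i',1)" using g a1 i'(3) by simp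
            show "sd_conj n g g" by (rule conj_refl[OF gC])
            show "sd_conj n h (i',1)" using h a1 i'(2) by simp
            show "sd_mult n g (i',1) = sd_mult n (i',1) g" using g a1 cm by simp
          qed (use gC i'C in auto)
          thus ?thesis unfolding sd_csc_adj_def using gC hC gh by simp
        qed
      qed
    qed
  qed
qed

definition vf :: "nat \<Rightarrow> nat \<times> nat" where "vf i = (i div 2, i mod 2)"

lemma vf_less: "i < j \<Longrightarrow> vf i < vf j"
  unfolding vf_def less_prod_def by (auto simp: less_eq_prod_def) presburger+

lemma vf_inj: "inj vf"
proof (rule injI)
  fix i j assume "vf i = vf j"
  thus "i = j" unfolding vf_def by (metis div_mult_mod_eq prod.inject)
qed

lemma vertices_eq: "csc_SD_vertices n = map vf [0..<8*n]"
proof -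
  have set: "set (map vf [0..<8*n]) = sd_carrier n"
  proof
    show "set (map vf [0..<8*n]) \<subseteq> sd_carrier n"
      by (auto simp: vf_def sd_carrier_def)
  next
    show "sd_carrier n \<subseteq> set (map vf [0..<8*n])"
    proof
      fix g assume "g \<in> sd_carrier n"
      then obtain a b where g: "g = (a,b)" "a < 4*n" "b < 2" by (auto simp: sd_carrier_def)
      have "vf (2*a+b) = g" using g by (auto simp: vf_def)
      moreover have "2*a+b < 8*n" using g by simp
      ultimately show "g \<in> set (map vf [0..<8*n])" by force
    qed
  qed
  have sorted: "sorted (map vf [0..<8*n])"
    unfolding sorted_map by (rule sorted_wrt_mono_rel[OF _ sorted_upt]) (metis order.order_iff_strict vf_less)
  have dist: "distinct (map vf [0..<8*n])"
    using vf_inj by (simp add: distinct_map inj_on_def inj_def)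
  show ?thesis unfolding csc_SD_vertices_def set[symmetric]
    by (rule sorted_list_of_set.idem_if_sorted_distinct[OF sorted dist])
qed

lemma vf_image: "vf ` {..<8*n} = sd_carrier n"
proof -
  have "set (map vf [0..<8*n]) = set (csc_SD_vertices n)" by (simp add: vertices_eq)
  also have "\<dots> = sd_carrier n" unfolding csc_SD_vertices_def
    by (simp add: sd_carrier_def)
  finally show ?thesis by (simp add: atLeast0LessThan)
qed

lemma vf_carrier: "i < 8*n \<Longrightarrow> vf i \<in> sd_carrier n"
  using vf_image by blast

lemma card_transport: "card {i. i < 8*n \<and> P (vf i)} = card {g \<in> sd_carrier n. P g}"
proof -
  have "{g \<in> sd_carrier n. P g} = vf ` {i. i < 8*n \<and> P (vf i)}"
  proof
    show "{g \<in> sd_carrier n. P g} \<subseteq> vf ` {i. i < 8*n \<and> P (vf i)}"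
    proof
      fix g assume g: "g \<in> {g \<in> sd_carrier n. P g}"
      hence "g \<in> vf ` {..<8*n}" using vf_image[of n] by simp
      then obtain i where "i < 8*n" "g = vf i" by auto
      thus "g \<in> vf ` {i. i < 8*n \<and> P (vf i)}" using g by auto
    qed
    show "vf ` {i. i < 8*n \<and> P (vf i)} \<subseteq> {g \<in> sd_carrier n. P g}"
      using vf_carrier by auto
  qed
  moreover have "inj_on vf {i. i < 8*n \<and> P (vf i)}" using vf_inj by (simp add: inj_on_def inj_def)
  ultimately show ?thesis by (simp add: card_image)
qed

lemma deg_generic:
  assumes dist: "distinct vs"
    and adjc: "\<And>i j. i < length vs \<Longrightarrow> j < length vs \<Longrightarrow> adj (vs!i) (vs!j) \<longleftrightarrow> i \<noteq> j \<and> E (c i) (c j)"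
    and i: "i < length vs"
  shows "graph_deg vs adj (vs!i) = card {j. j < length vs \<and> j \<noteq> i \<and> E (c i) (c j)}"
proof -
  have "{w \<in> set vs. adj (vs!i) w} = (\<lambda>j. vs!j) ` {j. j < length vs \<and> j \<noteq> i \<and> E (c i) (c j)}"
  proof
    show "{w \<in> set vs. adj (vs!i) w} \<subseteq> (\<lambda>j. vs!j) ` {j. j < length vs \<and> j \<noteq> i \<and> E (c i) (c j)}"
    proof
      fix w assume "w \<in> {w \<in> set vs. adj (vs!i) w}"
      then obtain j where j: "j < length vs" "w = vs!j" "adj (vs!i) (vs!j)" by (auto simp: in_set_conv_nth)
      thus "w \<in> (\<lambda>j. vs!j) ` {j. j < length vs \<and> j \<noteq> i \<and> E (c i) (c j)}"
        using adjc[OF i j(1)] by auto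
    qed
    show "(\<lambda>j. vs!j) ` {j. j < length vs \<and> j \<noteq> i \<and> E (c i) (c j)} \<subseteq> {w \<in> set vs. adj (vs!i) w}"
      using adjc[OF i] by auto
  qed
  moreover have "inj_on (\<lambda>j. vs!j) {j. j < length vs \<and> j \<noteq> i \<and> E (c i) (c j)}"
    by (rule inj_on_nth[OF dist]) auto
  ultimately show ?thesis unfolding graph_deg_def by (simp add: card_image)
qed

lemma sombor_generic:
  assumes adjc: "\<And>i j. i < length vs \<Longrightarrow> j < length vs \<Longrightarrow> adj (vs!i) (vs!j) \<longleftrightarrow> i \<noteq> j \<and> E (c i) (c j)"
    and degc: "\<And>i. i < length vs \<Longrightarrow> graph_deg vs adj (vs!i) = D (c i)"
  shows "sombor_matrix vs adj = mat (length vs) (length vs) (\<lambda>(i,j). if i = j then 0 else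
      if E (c i) (c j) then sqrt ((real (D (c i)))^2 + (real (D (c j)))^2) else 0)"
  unfolding sombor_matrix_def by (rule eq_matI) (auto simp: adjc degc)

lemma deg_count:
  fixes c :: "nat \<Rightarrow> nat"
  assumes i: "i < N" and t: "c i = t" "t \<noteq> 0"
  shows "card {j. j < N \<and> j \<noteq> i \<and> (t = 0 \<or> c j = 0 \<or> t = c j)}
     = card {j. j < N \<and> c j = 0} + card {j. j < N \<and> c j = t} - 1"
proof -
  have "{j. j < N \<and> j \<noteq> i \<and> (t = 0 \<or> c j = 0 \<or> t = c j)} = ({j. j < N \<and> c j = 0} \<union> {j. j < N \<and> c j = t}) - {i}"
    using t by auto
  moreover have "i \<in> {j. j < N \<and> c j = 0} \<union> {j. j < N \<and> c j = t}" using i t by auto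
  moreover have "card ({j. j < N \<and> c j = 0} \<union> {j. j < N \<and> c j = t}) = card {j. j < N \<and> c j = 0} + card {j. j < N \<and> c j = t}"
    by (rule card_Un_disjoint) (use t in auto)
  ultimately show ?thesis by (simp add: card_Diff_singleton)
qed

lemma deg_count0:
  fixes c :: "nat \<Rightarrow> nat"
  assumes i: "i < N"
  shows "card {j. j < N \<and> j \<noteq> i \<and> (0 = (0::nat) \<or> c j = 0 \<or> 0 = c j)} = N - 1"
proof -
  have "{j. j < N \<and> j \<noteq> i \<and> (0 = (0::nat) \<or> c j = 0 \<or> 0 = c j)} = {..<N} - {i}" by auto
  thus ?thesis using i by (simp add: card_Diff_singleton)
qed

lemma zc_pos: "n \<ge> 1 \<Longrightarrow> zc n > 0" by (simp add: zc_def)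

lemma zc_dvd_nat: "zc n dvd 4*n" by (auto simp: zc_def)

lemma card_mults:
  assumes n: "n \<ge> 1"
  shows "card {a. a < 4*n \<and> zc n dvd a} = 4*n div zc n"
proof -
  obtain r where r: "4*n = zc n * r" using zc_dvd_nat by blast
  have z: "zc n > 0" using zc_pos[OF n] .
  have "{a. a < 4*n \<and> zc n dvd a} = (\<lambda>q. zc n * q) ` {..<r}"
  proof
    show "{a. a < 4*n \<and> zc n dvd a} \<subseteq> (\<lambda>q. zc n * q) ` {..<r}"
    proof
      fix a assume "a \<in> {a. a < 4*n \<and> zc n dvd a}"
      then obtain q where "a = zc n * q" "zc n * q < zc n * r" using r by auto
      thus "a \<in> (\<lambda>q. zc n * q) ` {..<r}" by auto
    qed
    show "(\<lambda>q. zc n * q) ` {..<r} \<subseteq> {a. a < 4*n \<and> zc n dvd a}"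
      using r z by auto
  qed
  moreover have "inj_on (\<lambda>q. zc n * q) {..<r}" using z by (auto simp: inj_on_def)
  ultimately show ?thesis using r z by (simp add: card_image)
qed

lemma cls0: "{g \<in> sd_carrier n. cl n g = 0} = (\<lambda>a. (a,0)) ` {a. a < 4*n \<and> zc n dvd a}"
  by (auto simp: cl_def central_def carrier_iff image_iff)

lemma cls1: "{g \<in> sd_carrier n. cl n g = 1} = (\<lambda>a. (a,0)) ` ({..<4*n} - {a. a < 4*n \<and> zc n dvd a})"
  by (auto simp: cl_def central_def carrier_iff image_iff split: if_splits)

lemma cls_odd2: "odd n \<Longrightarrow> {g \<in> sd_carrier n. cl n g = 2} = (\<lambda>a. (a,1)) ` {..<4*n}"
  by (auto simp: cl_def central_def carrier_iff image_iff split: if_splits)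

lemma cls_even2: "even n \<Longrightarrow> {g \<in> sd_carrier n. cl n g = 2} = (\<lambda>m. (2*m,1)) ` {..<2*n}"
  by (auto simp: cl_def central_def carrier_iff image_iff split: if_splits elim!: evenE)

lemma cls_even3: "even n \<Longrightarrow> {g \<in> sd_carrier n. cl n g = 3} = (\<lambda>m. (2*m+1,1)) ` {..<2*n}"
  by (auto simp: cl_def central_def carrier_iff image_iff split: if_splits elim!: oddE)

lemma card0: "n \<ge> 1 \<Longrightarrow> card {g \<in> sd_carrier n. cl n g = 0} = 4*n div zc n"
  unfolding cls0 by (subst card_image) (auto simp: inj_on_def card_mults)

lemma card1: "n \<ge> 1 \<Longrightarrow> card {g \<in> sd_carrier n. cl n g = 1} = 4*n - 4*n div zc n"
proof -
  assume n: "n \<ge> 1"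
  have "card ({..<4*n} - {a. a < 4*n \<and> zc n dvd a}) = 4*n - 4*n div zc n"
    by (subst card_Diff_subset) (auto simp: card_mults[OF n])
  thus ?thesis unfolding cls1 by (subst card_image) (auto simp: inj_on_def)
qed

lemma card_odd2: "odd n \<Longrightarrow> card {g \<in> sd_carrier n. cl n g = 2} = 4*n"
  unfolding cls_odd2 by (subst card_image) (auto simp: inj_on_def)

lemma card_even2: "even n \<Longrightarrow> card {g \<in> sd_carrier n. cl n g = 2} = 2*n"
  unfolding cls_even2 by (subst card_image) (auto simp: inj_on_def)

lemma card_even3: "even n \<Longrightarrow> card {g \<in> sd_carrier n. cl n g = 3} = 2*n"
  unfolding cls_even3 by (subst card_image) (auto simp: inj_on_def)

definition sn :: "nat \<Rightarrow> nat \<Rightarrow> nat" where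
  "sn n t = card {g \<in> sd_carrier n. cl n g = t}"

definition Dn :: "nat \<Rightarrow> nat \<Rightarrow> nat" where
  "Dn n t = (if t = 0 then 8*n - 1 else sn n 0 + sn n t - 1)"

definition Wn :: "nat \<Rightarrow> nat \<Rightarrow> nat \<Rightarrow> real" where
  "Wn n t u = (if t = 0 \<or> u = 0 \<or> t = u then sqrt ((real (Dn n t))^2 + (real (Dn n u))^2) else 0)"

lemma vs_len: "length (csc_SD_vertices n) = 8*n" by (simp add: vertices_eq)
lemma vs_nth: "i < 8*n \<Longrightarrow> csc_SD_vertices n ! i = vf i" by (simp add: vertices_eq)
lemma vs_dist: "distinct (csc_SD_vertices n)"
  unfolding vertices_eq using vf_inj by (simp add: distinct_map inj_on_def inj_def)

lemma adjc:
  assumes n: "n \<ge> 2" and i: "i < 8*n" and j: "j < 8*n"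
  shows "sd_csc_adj n (csc_SD_vertices n ! i) (csc_SD_vertices n ! j) \<longleftrightarrow>
     i \<noteq> j \<and> (cl n (vf i) = 0 \<or> cl n (vf j) = 0 \<or> cl n (vf i) = cl n (vf j))"
proof -
  have "vf i = vf j \<longleftrightarrow> i = j" using vf_inj by (auto simp: inj_def)
  thus ?thesis unfolding vs_nth[OF i] vs_nth[OF j] adj_iff[OF n] using vf_carrier[OF i] vf_carrier[OF j] by auto
qed

lemma sn_transport: "card {i. i < 8*n \<and> cl n (vf i) = t} = sn n t"
  unfolding sn_def by (rule card_transport)

lemma deg_main:
  assumes n: "n \<ge> 2" and i: "i < 8*n"
  shows "graph_deg (csc_SD_vertices n) (sd_csc_adj n) (csc_SD_vertices n ! i) = Dn n (cl n (vf i))"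
proof -
  define c where "c j = cl n (vf j)" for j
  have "graph_deg (csc_SD_vertices n) (sd_csc_adj n) (csc_SD_vertices n ! i)
     = card {j. j < length (csc_SD_vertices n) \<and> j \<noteq> i \<and> (c i = 0 \<or> c j = 0 \<or> c i = c j)}"
    by (rule deg_generic[OF vs_dist]) (use adjc[OF n] i in \<open>auto simp: vs_len c_def\<close>)
  also have "\<dots> = Dn n (c i)"
  proof (cases "c i = 0")
    case True
    thus ?thesis using deg_count0[OF i, of c] by (simp add: vs_len Dn_def)
  next
    case False
    thus ?thesis using deg_count[of i "8*n" c "c i", OF i refl False] by (simp add: vs_len Dn_def c_def sn_transport)
  qed
  finally show ?thesis by (simp add: c_def)
qed

lemma sombor_main:
  assumes n: "n \<ge> 2"
  shows "sombor_matrix (csc_SD_vertices n) (sd_csc_adj n) =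
    mat (8*n) (8*n) (\<lambda>(i,j). if i = j then 0 else Wn n (cl n (vf i)) (cl n (vf j)))"
proof -
  define c where "c j = cl n (vf j)" for j
  have "sombor_matrix (csc_SD_vertices n) (sd_csc_adj n) = mat (length (csc_SD_vertices n)) (length (csc_SD_vertices n))
     (\<lambda>(i,j). if i = j then 0 else if (c i = 0 \<or> c j = 0 \<or> c i = c j)
        then sqrt ((real (Dn n (c i)))^2 + (real (Dn n (c j)))^2) else 0)"
    by (rule sombor_generic) (use adjc[OF n] deg_main[OF n] in \<open>auto simp: vs_len c_def\<close>)
  also have "\<dots> = mat (8*n) (8*n) (\<lambda>(i,j). if i = j then 0 else Wn n (cl n (vf i)) (cl n (vf j)))"
    by (rule eq_matI) (auto simp: vs_len Wn_def c_def)
  finally show ?thesis .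
qed

lemma charpoly_main:
  assumes n: "n \<ge> 2" and k: "\<And>g. g \<in> sd_carrier n \<Longrightarrow> cl n g < k"
    and ne: "\<And>t. t < k \<Longrightarrow> sn n t > 0"
    and x: "\<And>t. t < k \<Longrightarrow> x + Wn n t t \<noteq> 0"
  shows "poly (char_poly (sombor_matrix (csc_SD_vertices n) (sd_csc_adj n))) x
     = (\<Prod>t<k. (x + Wn n t t) ^ (sn n t - 1))
       * det (mat k k (\<lambda>(t,u). (if t = u then x + Wn n t t else 0) - Wn n t u * real (sn n u)))"
proof -
  have ne': "\<exists>i<8*n. cl n (vf i) = t" if t: "t < k" for t
  proof -
    have "card {i. i < 8*n \<and> cl n (vf i) = t} > 0" using ne[OF t] sn_transport by simp
    then obtain i where "i \<in> {i. i < 8*n \<and> cl n (vf i) = t}" by (metis card_gt_0_iff ex_in_conv)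
    thus ?thesis by auto
  qed
  show ?thesis unfolding sombor_main[OF n]
    using charpoly_classes[of "8*n" "\<lambda>i. cl n (vf i)" k x "Wn n"] k[OF vf_carrier] ne' x
    by (simp add: sn_transport)
qed

lemma sn_odd:
  assumes n: "n \<ge> 2" "odd n"
  shows "sn n 0 = 4" "sn n 1 = 4*n - 4" "sn n 2 = 4*n"
proof -
  have z: "zc n = n" using n by (simp add: zc_def)
  show "sn n 0 = 4" unfolding sn_def using card0[of n] n z by simp
  show "sn n 1 = 4*n - 4" unfolding sn_def using card1[of n] n z by simp
  show "sn n 2 = 4*n" unfolding sn_def using card_odd2[of n] n by simp
qed

lemma sn_even:
  assumes n: "n \<ge> 2" "even n"
  shows "sn n 0 = 2" "sn n 1 = 4*n - 2" "sn n 2 = 2*n" "sn n 3 = 2*n"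
proof -
  have z: "zc n = 2*n" using n by (simp add: zc_def)
  have d: "4*n div (2*n) = 2" using n by simp
  show "sn n 0 = 2" unfolding sn_def using card0[of n] n z d by simp
  show "sn n 1 = 4*n - 2" unfolding sn_def using card1[of n] n z d by simp
  show "sn n 2 = 2*n" unfolding sn_def using card_even2[of n] n by simp
  show "sn n 3 = 2*n" unfolding sn_def using card_even3[of n] n by simp
qed

lemma cl_lt_odd: "odd n \<Longrightarrow> cl n g < 3" by (simp add: cl_def)
lemma cl_lt: "cl n g < 4" by (simp add: cl_def)

lemma sqrt_double: "a \<ge> 0 \<Longrightarrow> sqrt (a^2 + a^2) = a * sqrt 2"
proof -
  assume a: "a \<ge> 0"
  have "a^2 + a^2 = 2 * a^2" by simp
  thus ?thesis using a by (simp add: real_sqrt_mult)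
qed

lemma W_diag: "Wn n t t = real (Dn n t) * sqrt 2"
  unfolding Wn_def using sqrt_double[of "real (Dn n t)"] by simp

lemma W_sym: "Wn n t u = Wn n u t"
  unfolding Wn_def by (auto simp: add.commute)

lemma W_sq: "(t = 0 \<or> u = 0 \<or> t = u) \<Longrightarrow> Wn n t u * Wn n t u = (real (Dn n t))^2 + (real (Dn n u))^2"
  unfolding Wn_def by simp

lemma W_zero: "t \<noteq> 0 \<Longrightarrow> u \<noteq> 0 \<Longrightarrow> t \<noteq> u \<Longrightarrow> Wn n t u = 0"
  unfolding Wn_def by simp

lemma poly_eq_cofinite:
  fixes p q :: "real poly"
  assumes S: "finite S" and eq: "\<And>x. x \<notin> S \<Longrightarrow> poly p x = poly q x"
  shows "p = q"
proof (rule ccontr)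
  assume "p \<noteq> q"
  hence "p - q \<noteq> 0" by simp
  hence fin: "finite {x. poly (p - q) x = 0}" by (rule poly_roots_finite)
  have "UNIV - S \<subseteq> {x. poly (p - q) x = 0}" using eq by auto
  hence "finite (UNIV - S)" using fin finite_subset by blast
  hence "finite ((UNIV - S) \<union> S)" using S by blast
  hence "finite (UNIV :: real set)" by simp
  thus False using infinite_UNIV_char_0 by blast
qed

lemma char_poly_nz:
  fixes A :: "real mat"
  assumes "A \<in> carrier_mat N N"
  shows "char_poly A \<noteq> 0"
  using degree_monic_char_poly[OF assms] by auto

lemma proots_lin_pow: "proots ([:c, 1:] ^ k) = replicate_mset k (- c)"
  by (simp add: proots_power repeat_mset_replicate_mset)

lemma proots_mult': "p * q \<noteq> 0 \<Longrightarrow> proots (p * q) = proots p + proots q"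
  by (rule proots_mult) auto

lemma prod3: "(\<Prod>t<(3::nat). f t) = f 0 * f 1 * (f 2 :: 'a :: comm_monoid_mult)"
  by (simp add: numeral_3_eq_3 numeral_2_eq_2 mult.assoc)

lemma prod4: "(\<Prod>t<(4::nat). f t) = f 0 * f 1 * f 2 * (f 3 :: 'a :: comm_monoid_mult)"
proof -
  have "{..<4::nat} = insert 3 {..<3}" by auto
  thus ?thesis by (simp add: prod3 mult_ac)
qed

lemma odd_alg:
  fixes x r s a b :: real
  assumes "s*s = 2" "a*a = (8*r-1)^2 + (4*r-1)^2" "b*b = (8*r-1)^2 + (4*r+3)^2"
  shows "(x - 3*((8*r-1)*s)) * ((x - (4*r-5)*((4*r-1)*s)) * (x - (4*r-1)*((4*r+3)*s)) - 0*0)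
     - (- a*(4*r-4)) * ((- a*4) * (x - (4*r-1)*((4*r+3)*s)) - 0 * (- b*4))
     + (- b*(4*r)) * ((- a*4) * 0 - (x - (4*r-5)*((4*r-1)*s)) * (- b*4))
   = (x - 3*(8*r-1)*s)*(x - (4*r-1)*(4*r-5)*s)*(x - (4*r-1)*(4*r+3)*s)
     - 32*(r-1)*(40*r^2-12*r+1)*(x - (4*r-1)*(4*r+3)*s) - 32*r*(40*r^2+4*r+5)*(x - (4*r-5)*(4*r-1)*s)"
    (is "?L = ?R")
proof -
  have "?L - ?R = - 16*(r-1)*(a*a - ((8*r-1)^2 + (4*r-1)^2))*(x - (4*r-1)*((4*r+3)*s))
     - 16*r*(b*b - ((8*r-1)^2 + (4*r+3)^2))*(x - (4*r-5)*((4*r-1)*s))"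
    by (simp add: algebra_simps power2_eq_square)
  also have "\<dots> = 0" using assms by simp
  finally show ?thesis by simp
qed

lemma odd_case:
  fixes n :: nat
  assumes n: "n \<ge> 2" and odd: "odd n"
  shows "sombor_spectrum (csc_SD_vertices n) (sd_csc_adj n) =
        replicate_mset 3 (complex_of_real (- (8 * real n - 1) * sqrt 2))
      + replicate_mset (4*n - 5) (complex_of_real (- (4 * real n - 1) * sqrt 2))
      + replicate_mset (4*n - 1) (complex_of_real (- (4 * real n + 3) * sqrt 2))
      + proots (map_poly complex_of_real
          ([: - (3 * (8 * real n - 1) * sqrt 2), 1 :]
             * [: - ((4 * real n - 1) * (4 * real n - 5) * sqrt 2), 1 :]
             * [: - ((4 * real n - 1) * (4 * real n + 3) * sqrt 2), 1 :]
           - Polynomial.smult (32 * (real n - 1) * (40 * (real n)^2 - 12 * real n + 1))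
               [: - ((4 * real n - 1) * (4 * real n + 3) * sqrt 2), 1 :]
           - Polynomial.smult (32 * real n * (40 * (real n)^2 + 4 * real n + 5))
               [: - ((4 * real n - 5) * (4 * real n - 1) * sqrt 2), 1 :]))"
proof -
  define r where "r = real n"
  define P where "P = [: - (3 * (8 * real n - 1) * sqrt 2), 1 :]
             * [: - ((4 * real n - 1) * (4 * real n - 5) * sqrt 2), 1 :]
             * [: - ((4 * real n - 1) * (4 * real n + 3) * sqrt 2), 1 :]
           - Polynomial.smult (32 * (real n - 1) * (40 * (real n)^2 - 12 * real n + 1))
               [: - ((4 * real n - 1) * (4 * real n + 3) * sqrt 2), 1 :]
           - Polynomial.smult (32 * real n * (40 * (real n)^2 + 4 * real n + 5))
               [: - ((4 * real n - 5) * (4 * real n - 1) * sqrt 2), 1 :]"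
  define M where "M = sombor_matrix (csc_SD_vertices n) (sd_csc_adj n)"
  have Mc: "M \<in> carrier_mat (8*n) (8*n)" unfolding M_def sombor_main[OF n] by simp
  have sn: "sn n 0 = 4" "sn n 1 = 4*n - 4" "sn n (Suc 0) = 4*n - 4" "sn n 2 = 4*n"
    using sn_odd[OF n odd] by simp_all
  have D0: "real (Dn n 0) = 8*r - 1" unfolding Dn_def r_def using n by (simp add: of_nat_diff)
  have D1: "real (Dn n 1) = 4*r - 1" unfolding Dn_def r_def using n by (simp add: sn of_nat_diff)
  have D2: "real (Dn n 2) = 4*r + 3" unfolding Dn_def r_def using n by (simp add: sn of_nat_diff)
  have s1: "real (sn n 1) = 4*r - 4" unfolding r_def using n by (simp add: sn of_nat_diff)
  have s0: "real (sn n 0) = 4" by (simp add: sn)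
  have s2: "real (sn n 2) = 4*r" unfolding r_def by (simp add: sn)
  define w0 where "w0 = (8*r - 1) * sqrt 2"
  define w1 where "w1 = (4*r - 1) * sqrt 2"
  define w2 where "w2 = (4*r + 3) * sqrt 2"
  have W0: "Wn n 0 0 = w0" unfolding W_diag D0 w0_def ..
  have W1: "Wn n 1 1 = w1" unfolding W_diag D1 w1_def ..
  have W2: "Wn n 2 2 = w2" unfolding W_diag D2 w2_def ..
  have ss: "sqrt 2 * sqrt 2 = (2::real)" by simp
  define a where "a = Wn n 0 1"
  define b where "b = Wn n 0 2"
  have aa: "a * a = (8*r-1)^2 + (4*r-1)^2" unfolding a_def using W_sq[of 0 1 n] D0 D1 by simp
  have bb: "b * b = (8*r-1)^2 + (4*r+3)^2" unfolding b_def using W_sq[of 0 2 n] D0 D2 by simp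
  have W10: "Wn n 1 0 = a" unfolding a_def by (rule W_sym)
  have W20: "Wn n 2 0 = b" unfolding b_def by (rule W_sym)
  have W12: "Wn n 1 2 = 0" "Wn n 2 1 = 0" by (simp_all add: W_zero)
  note W1' = W1[unfolded One_nat_def] and W10' = W10[unfolded One_nat_def] and W12' = W12[unfolded One_nat_def]
    and a_def' = a_def[unfolded One_nat_def] and s1' = s1[unfolded One_nat_def]
  define A where "A = [:w0, 1:] ^ 3 * [:w1, 1:] ^ (4*n - 5) * [:w2, 1:] ^ (4*n - 1)"
  have cp: "char_poly M = A * P"
  proof (rule poly_eq_cofinite[of "{-w0, -w1, -w2}"])
    fix x assume x: "x \<notin> {-w0, -w1, -w2}"
    have xW: "x + Wn n t t \<noteq> 0" if "t < 3" for t
    proof -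
      have "t = 0 \<or> t = 1 \<or> t = 2" using that by auto
      thus ?thesis using x W0 W1 W2 by (auto simp: add_eq_0_iff)
    qed
    have ne: "sn n t > 0" if "t < 3" for t
    proof -
      have "t = 0 \<or> t = 1 \<or> t = 2" using that by auto
      thus ?thesis using sn n by auto
    qed
    define K where "K = mat 3 3 (\<lambda>(t,u). (if t = u then x + Wn n t t else 0) - Wn n t u * real (sn n u))"
    have "poly (char_poly M) x = (\<Prod>t<3. (x + Wn n t t) ^ (sn n t - 1)) * det K"
      unfolding M_def K_def by (rule charpoly_main[OF n cl_lt_odd[OF odd] ne xW])
    also have "(\<Prod>t<3. (x + Wn n t t) ^ (sn n t - 1)) = (x + w0)^3 * (x + w1)^(4*n-5) * (x + w2)^(4*n-1)"
      unfolding prod3 using n by (simp add: W0 W1 W2 W1' sn)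
    also have "det K = poly P x"
    proof -
      have Kc: "K \<in> carrier_mat 3 3" unfolding K_def by simp
      have e: "K $$ (0,0) = x - 3 * w0" "K $$ (1,1) = x - (4*r-5) * w1" "K $$ (2,2) = x - (4*r-1) * w2"
        "K $$ (0,1) = - a * (4*r-4)" "K $$ (1,0) = - a * 4" "K $$ (0,2) = - b * (4*r)" "K $$ (2,0) = - b * 4"
        "K $$ (1,2) = 0" "K $$ (2,1) = 0"
        unfolding K_def by (simp_all add: W0 W1 W2 W10 W20 W12 W1' W10' W12' s0 s1 s1' s2 a_def b_def a_def' algebra_simps)
      have "det K = K $$ (0,0) * (K $$ (1,1) * K $$ (2,2) - K $$ (1,2) * K $$ (2,1))
         - K $$ (0,1) * (K $$ (1,0) * K $$ (2,2) - K $$ (1,2) * K $$ (2,0))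
         + K $$ (0,2) * (K $$ (1,0) * K $$ (2,1) - K $$ (1,1) * K $$ (2,0))" by (rule det3[OF Kc])
      also have "\<dots> = (x - 3*(8*r-1)*sqrt 2)*(x - (4*r-1)*(4*r-5)*sqrt 2)*(x - (4*r-1)*(4*r+3)*sqrt 2)
     - 32*(r-1)*(40*r^2-12*r+1)*(x - (4*r-1)*(4*r+3)*sqrt 2) - 32*r*(40*r^2+4*r+5)*(x - (4*r-5)*(4*r-1)*sqrt 2)"
        unfolding e w0_def w1_def w2_def by (rule odd_alg[OF ss aa bb])
      also have "\<dots> = poly P x"
        unfolding P_def r_def by (simp add: algebra_simps)
      finally show ?thesis .
    qed
    also have "(x + w0)^3 * (x + w1)^(4*n-5) * (x + w2)^(4*n-1) * poly P x = poly (A * P) x"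
      unfolding A_def by (simp add: algebra_simps)
    finally show "poly (char_poly M) x = poly (A * P) x" .
  qed simp
  have nz: "map_poly complex_of_real (A * P) \<noteq> 0" using char_poly_nz[OF Mc] cp by simp
  interpret cr: map_poly_comm_ring_hom "complex_of_real" by unfold_locales
  have "sombor_spectrum (csc_SD_vertices n) (sd_csc_adj n) = proots (map_poly complex_of_real (A * P))"
    unfolding sombor_spectrum_def M_def[symmetric] cp ..
  also have "map_poly complex_of_real (A * P) = [:complex_of_real w0, 1:] ^ 3 * [:complex_of_real w1, 1:] ^ (4*n - 5)
      * [:complex_of_real w2, 1:] ^ (4*n - 1) * map_poly complex_of_real P"
    unfolding A_def by (simp add: cr.hom_mult cr.hom_power)
  also have "proots \<dots> = replicate_mset 3 (- complex_of_real w0) + replicate_mset (4*n - 5) (- complex_of_real w1)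
      + replicate_mset (4*n - 1) (- complex_of_real w2) + proots (map_poly complex_of_real P)"
    using nz unfolding A_def by (simp add: cr.hom_mult cr.hom_power proots_mult proots_lin_pow del: proots_power)
  also have "- complex_of_real w0 = complex_of_real (- (8 * real n - 1) * sqrt 2)"
    unfolding w0_def r_def by (simp add: algebra_simps)
  also have "- complex_of_real w1 = complex_of_real (- (4 * real n - 1) * sqrt 2)"
    unfolding w1_def r_def by (simp add: algebra_simps)
  also have "- complex_of_real w2 = complex_of_real (- (4 * real n + 3) * sqrt 2)"
    unfolding w2_def r_def by (simp add: algebra_simps)
  finally show ?thesis unfolding P_def .
qed

lemma even_alg:
  fixes x r s a b c :: real
  assumes "a*a = (8*r-1)^2 + (4*r-1)^2" "b*b = (8*r-1)^2 + (2*r+1)^2" "c*c = (8*r-1)^2 + (2*r+1)^2"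
  shows "(x - (8*r-1)*s) * (x - (4*r-3)*((4*r-1)*s)) * (x - (2*r-1)*((2*r+1)*s)) * (x - (2*r-1)*((2*r+1)*s))
     - (- a*(4*r-2)) * (- a*2) * (x - (2*r-1)*((2*r+1)*s)) * (x - (2*r-1)*((2*r+1)*s))
     - (- b*(2*r)) * (- b*2) * (x - (4*r-3)*((4*r-1)*s)) * (x - (2*r-1)*((2*r+1)*s))
     - (- c*(2*r)) * (- c*2) * (x - (4*r-3)*((4*r-1)*s)) * (x - (2*r-1)*((2*r+1)*s))
   = (x - (8*r-1)*s) * (x - (4*r-1)*(4*r-3)*s) * (x - (2*r-1)*(2*r+1)*s)^2
     - 8*(2*r-1)*(40*r^2-12*r+1)*(x - (2*r-1)*(2*r+1)*s)^2
     - 16*r*(34*r^2-6*r+1)*((x - (4*r-3)*(4*r-1)*s)*(x - (2*r-1)*(2*r+1)*s))"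
    (is "?L = ?R")
proof -
  have "?L - ?R = - 4*(2*r-1)*(a*a - ((8*r-1)^2 + (4*r-1)^2))*(x - (2*r-1)*((2*r+1)*s))^2
     - 4*r*(b*b - ((8*r-1)^2 + (2*r+1)^2))*(x - (4*r-3)*((4*r-1)*s))*(x - (2*r-1)*((2*r+1)*s))
     - 4*r*(c*c - ((8*r-1)^2 + (2*r+1)^2))*(x - (4*r-3)*((4*r-1)*s))*(x - (2*r-1)*((2*r+1)*s))"
    by (simp add: algebra_simps power2_eq_square)
  also have "\<dots> = 0" using assms by simp
  finally show ?thesis by simp
qed

lemma even_case:
  fixes n :: nat
  assumes n: "n \<ge> 2" and ev: "even n"
  shows "sombor_spectrum (csc_SD_vertices n) (sd_csc_adj n) =
        replicate_mset (4*n - 2) (complex_of_real (- (2 * real n + 1) * sqrt 2))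
      + replicate_mset (4*n - 3) (complex_of_real (- (4 * real n - 1) * sqrt 2))
      + replicate_mset 1 (complex_of_real (- (8 * real n - 1) * sqrt 2))
      + proots (map_poly complex_of_real
          ([: - ((8 * real n - 1) * sqrt 2), 1 :]
             * [: - ((4 * real n - 1) * (4 * real n - 3) * sqrt 2), 1 :]
             * [: - ((2 * real n - 1) * (2 * real n + 1) * sqrt 2), 1 :] ^ 2
           - Polynomial.smult (8 * (2 * real n - 1) * (40 * (real n)^2 - 12 * real n + 1))
               ([: - ((2 * real n - 1) * (2 * real n + 1) * sqrt 2), 1 :] ^ 2)
           - Polynomial.smult (16 * real n * (34 * (real n)^2 - 6 * real n + 1))
               ([: - ((4 * real n - 3) * (4 * real n - 1) * sqrt 2), 1 :]
                * [: - ((2 * real n - 1) * (2 * real n + 1) * sqrt 2), 1 :])))"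
proof -
  define r where "r = real n"
  define P where "P = [: - ((8 * real n - 1) * sqrt 2), 1 :]
             * [: - ((4 * real n - 1) * (4 * real n - 3) * sqrt 2), 1 :]
             * [: - ((2 * real n - 1) * (2 * real n + 1) * sqrt 2), 1 :] ^ 2
           - Polynomial.smult (8 * (2 * real n - 1) * (40 * (real n)^2 - 12 * real n + 1))
               ([: - ((2 * real n - 1) * (2 * real n + 1) * sqrt 2), 1 :] ^ 2)
           - Polynomial.smult (16 * real n * (34 * (real n)^2 - 6 * real n + 1))
               ([: - ((4 * real n - 3) * (4 * real n - 1) * sqrt 2), 1 :]
                * [: - ((2 * real n - 1) * (2 * real n + 1) * sqrt 2), 1 :])"
  define M where "M = sombor_matrix (csc_SD_vertices n) (sd_csc_adj n)"
  have Mc: "M \<in> carrier_mat (8*n) (8*n)" unfolding M_def sombor_main[OF n] by simp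
  have sn: "sn n 0 = 2" "sn n 1 = 4*n - 2" "sn n (Suc 0) = 4*n - 2" "sn n 2 = 2*n" "sn n 3 = 2*n"
    using sn_even[OF n ev] by simp_all
  have D0: "real (Dn n 0) = 8*r - 1" unfolding Dn_def r_def using n by (simp add: of_nat_diff)
  have D1: "real (Dn n 1) = 4*r - 1" unfolding Dn_def r_def using n by (simp add: sn of_nat_diff)
  have D2: "real (Dn n 2) = 2*r + 1" unfolding Dn_def r_def using n by (simp add: sn of_nat_diff)
  have D3: "real (Dn n 3) = 2*r + 1" unfolding Dn_def r_def using n by (simp add: sn of_nat_diff)
  have s1: "real (sn n 1) = 4*r - 2" unfolding r_def using n by (simp add: sn of_nat_diff)
  have s0: "real (sn n 0) = 2" by (simp add: sn)
  have s2: "real (sn n 2) = 2*r" unfolding r_def by (simp add: sn)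
  have s3: "real (sn n 3) = 2*r" unfolding r_def by (simp add: sn)
  define w0 where "w0 = (8*r - 1) * sqrt 2"
  define w1 where "w1 = (4*r - 1) * sqrt 2"
  define w2 where "w2 = (2*r + 1) * sqrt 2"
  have W0: "Wn n 0 0 = w0" unfolding W_diag D0 w0_def ..
  have W1: "Wn n 1 1 = w1" unfolding W_diag D1 w1_def ..
  have W2: "Wn n 2 2 = w2" unfolding W_diag D2 w2_def ..
  have W3: "Wn n 3 3 = w2" unfolding W_diag D3 w2_def ..
  define a where "a = Wn n 0 1"
  define b where "b = Wn n 0 2"
  define c where "c = Wn n 0 3"
  have aa: "a * a = (8*r-1)^2 + (4*r-1)^2" unfolding a_def using W_sq[of 0 1 n] D0 D1 by simp
  have bb: "b * b = (8*r-1)^2 + (2*r+1)^2" unfolding b_def using W_sq[of 0 2 n] D0 D2 by simp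
  have cc: "c * c = (8*r-1)^2 + (2*r+1)^2" unfolding c_def using W_sq[of 0 3 n] D0 D3 by simp
  have W10: "Wn n 1 0 = a" unfolding a_def by (rule W_sym)
  have W20: "Wn n 2 0 = b" unfolding b_def by (rule W_sym)
  have W30: "Wn n 3 0 = c" unfolding c_def by (rule W_sym)
  have Wz: "Wn n 1 2 = 0" "Wn n 2 1 = 0" "Wn n 1 3 = 0" "Wn n 3 1 = 0" "Wn n 2 3 = 0" "Wn n 3 2 = 0"
    by (simp_all add: W_zero)
  note W1' = W1[unfolded One_nat_def] and W10' = W10[unfolded One_nat_def] and Wz' = Wz[unfolded One_nat_def]
    and a_def' = a_def[unfolded One_nat_def] and s1' = s1[unfolded One_nat_def]
  define A where "A = [:w0, 1:] * [:w1, 1:] ^ (4*n - 3) * [:w2, 1:] ^ (2*n - 1) * [:w2, 1:] ^ (2*n - 1)"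
  have cp: "char_poly M = A * P"
  proof (rule poly_eq_cofinite[of "{-w0, -w1, -w2}"])
    fix x assume x: "x \<notin> {-w0, -w1, -w2}"
    have xW: "x + Wn n t t \<noteq> 0" if "t < 4" for t
    proof -
      have "t = 0 \<or> t = 1 \<or> t = 2 \<or> t = 3" using that by auto
      thus ?thesis using x W0 W1 W2 W3 by (auto simp: add_eq_0_iff)
    qed
    have ne: "sn n t > 0" if "t < 4" for t
    proof -
      have "t = 0 \<or> t = 1 \<or> t = 2 \<or> t = 3" using that by auto
      thus ?thesis using sn n by auto
    qed
    define K where "K = mat 4 4 (\<lambda>(t,u). (if t = u then x + Wn n t t else 0) - Wn n t u * real (sn n u))"
    have "poly (char_poly M) x = (\<Prod>t<4. (x + Wn n t t) ^ (sn n t - 1)) * det K"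
      unfolding M_def K_def by (rule charpoly_main[OF n cl_lt ne xW])
    also have "(\<Prod>t<4. (x + Wn n t t) ^ (sn n t - 1)) = (x + w0) * (x + w1)^(4*n-3) * (x + w2)^(2*n-1) * (x + w2)^(2*n-1)"
      unfolding prod4 using n by (simp add: W0 W1 W2 W3 W1' sn)
    also have "det K = poly P x"
    proof -
      have Kc: "K \<in> carrier_mat 4 4" unfolding K_def by simp
      have e: "K $$ (0,0) = x - (8*r-1) * sqrt 2" "K $$ (1,1) = x - (4*r-3) * w1" "K $$ (2,2) = x - (2*r-1) * w2"
        "K $$ (3,3) = x - (2*r-1) * w2"
        "K $$ (0,1) = - a * (4*r-2)" "K $$ (1,0) = - a * 2" "K $$ (0,2) = - b * (2*r)" "K $$ (2,0) = - b * 2"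
        "K $$ (0,3) = - c * (2*r)" "K $$ (3,0) = - c * 2"
        unfolding K_def by (simp_all add: W0 W1 W2 W3 W10 W20 W30 W1' W10' s0 s1 s1' s2 s3 a_def b_def c_def a_def' w0_def algebra_simps)
      have z: "K $$ (1,2) = 0" "K $$ (1,3) = 0" "K $$ (2,1) = 0" "K $$ (2,3) = 0" "K $$ (3,1) = 0" "K $$ (3,2) = 0"
        unfolding K_def by (simp_all add: Wz Wz')
      have "det K = K $$ (0,0) * K $$ (1,1) * K $$ (2,2) * K $$ (3,3)
     - K $$ (0,1) * K $$ (1,0) * K $$ (2,2) * K $$ (3,3)
     - K $$ (0,2) * K $$ (2,0) * K $$ (1,1) * K $$ (3,3)
     - K $$ (0,3) * K $$ (3,0) * K $$ (1,1) * K $$ (2,2)" by (rule det4_star[OF Kc z])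
      also have "\<dots> = (x - (8*r-1)*sqrt 2) * (x - (4*r-1)*(4*r-3)*sqrt 2) * (x - (2*r-1)*(2*r+1)*sqrt 2)^2
     - 8*(2*r-1)*(40*r^2-12*r+1)*(x - (2*r-1)*(2*r+1)*sqrt 2)^2
     - 16*r*(34*r^2-6*r+1)*((x - (4*r-3)*(4*r-1)*sqrt 2)*(x - (2*r-1)*(2*r+1)*sqrt 2))"
        unfolding e w1_def w2_def by (rule even_alg[OF aa bb cc])
      also have "\<dots> = poly P x"
        unfolding P_def r_def by (simp add: algebra_simps)
      finally show ?thesis .
    qed
    also have "(x + w0) * (x + w1)^(4*n-3) * (x + w2)^(2*n-1) * (x + w2)^(2*n-1) * poly P x = poly (A * P) x"
      unfolding A_def by (simp add: algebra_simps)
    finally show "poly (char_poly M) x = poly (A * P) x" .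
  qed simp
  have nz: "map_poly complex_of_real (A * P) \<noteq> 0" using char_poly_nz[OF Mc] cp by simp
  interpret cr: map_poly_comm_ring_hom "complex_of_real" by unfold_locales
  define F0 where "F0 = [:complex_of_real w0, 1:]"
  define F1 where "F1 = [:complex_of_real w1, 1:] ^ (4*n - 3)"
  define F2 where "F2 = [:complex_of_real w2, 1:] ^ (2*n - 1)"
  define PP where "PP = map_poly complex_of_real P"
  have "sombor_spectrum (csc_SD_vertices n) (sd_csc_adj n) = proots (map_poly complex_of_real (A * P))"
    unfolding sombor_spectrum_def M_def[symmetric] cp ..
  also have "map_poly complex_of_real (A * P) = F0 * F1 * F2 * F2 * PP"
    unfolding A_def F0_def F1_def F2_def PP_def by (simp only: cr.hom_mult cr.hom_power) simp
  also have "proots \<dots> = replicate_mset 1 (- complex_of_real w0) + replicate_mset (4*n - 3) (- complex_of_real w1)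
      + replicate_mset (2*n - 1) (- complex_of_real w2) + replicate_mset (2*n - 1) (- complex_of_real w2)
      + proots (map_poly complex_of_real P)"
  proof -
    have Pnz: "P \<noteq> 0" using nz by simp
    have f: "F0 \<noteq> 0" "F1 \<noteq> 0" "F2 \<noteq> 0" "PP \<noteq> 0" using Pnz by (simp_all add: F0_def F1_def F2_def PP_def)
    have nz1: "F0 * F1 * F2 * F2 * PP \<noteq> 0" using f by simp
    have nz2: "F0 * F1 * F2 * F2 \<noteq> 0" using nz1 by (metis mult_zero_left)
    have nz3: "F0 * F1 * F2 \<noteq> 0" using nz2 by (metis mult_zero_left)
    have nz4: "F0 * F1 \<noteq> 0" using nz3 by (metis mult_zero_left)
    have "proots (F0 * F1 * F2 * F2 * PP) = proots F0 + proots F1 + proots F2 + proots F2 + proots PP"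
      unfolding proots_mult'[OF nz1] proots_mult'[OF nz2] proots_mult'[OF nz3] proots_mult'[OF nz4] ..
    thus ?thesis unfolding F0_def F1_def F2_def PP_def proots_lin_pow by simp
  qed
  also have "replicate_mset 1 (- complex_of_real w0) + replicate_mset (4*n - 3) (- complex_of_real w1)
      + replicate_mset (2*n - 1) (- complex_of_real w2) + replicate_mset (2*n - 1) (- complex_of_real w2)
    = replicate_mset (4*n - 2) (- complex_of_real w2) + replicate_mset (4*n - 3) (- complex_of_real w1)
      + replicate_mset 1 (- complex_of_real w0)"
  proof -
    have "replicate_mset (2*n - 1) (- complex_of_real w2) + replicate_mset (2*n - 1) (- complex_of_real w2)
      = replicate_mset (4*n - 2) (- complex_of_real w2)"
    proof -
      have "(2*n - 1) + (2*n - 1) = 4*n - 2" using n by simp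
      moreover have "replicate_mset k y + replicate_mset k y = replicate_mset (k + k) y" for k and y :: complex
        by (rule multiset_eqI) simp
      ultimately show ?thesis by metis
    qed
    thus ?thesis by (simp add: ac_simps)
  qed
  also have "- complex_of_real w0 = complex_of_real (- (8 * real n - 1) * sqrt 2)"
    unfolding w0_def r_def by (simp add: algebra_simps)
  also have "- complex_of_real w1 = complex_of_real (- (4 * real n - 1) * sqrt 2)"
    unfolding w1_def r_def by (simp add: algebra_simps)
  also have "- complex_of_real w2 = complex_of_real (- (2 * real n + 1) * sqrt 2)"
    unfolding w2_def r_def by (simp add: algebra_simps)
  finally have fin: "sombor_spectrum (csc_SD_vertices n) (sd_csc_adj n) =
        replicate_mset (4*n - 2) (complex_of_real (- (2 * real n + 1) * sqrt 2))
      + replicate_mset (4*n - 3) (complex_of_real (- (4 * real n - 1) * sqrt 2))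
      + replicate_mset 1 (complex_of_real (- (8 * real n - 1) * sqrt 2))
      + proots (map_poly complex_of_real P)" .
  show ?thesis using fin unfolding P_def .
qed

theorem corollary4p7:
  fixes n :: nat
  assumes "n \<ge> 2"
  shows "(odd n \<longrightarrow>
      sombor_spectrum (csc_SD_vertices n) (sd_csc_adj n) =
        replicate_mset 3 (complex_of_real (- (8 * real n - 1) * sqrt 2))
      + replicate_mset (4*n - 5) (complex_of_real (- (4 * real n - 1) * sqrt 2))
      + replicate_mset (4*n - 1) (complex_of_real (- (4 * real n + 3) * sqrt 2))
      + proots (map_poly complex_of_real
          ([: - (3 * (8 * real n - 1) * sqrt 2), 1 :]
             * [: - ((4 * real n - 1) * (4 * real n - 5) * sqrt 2), 1 :]
             * [: - ((4 * real n - 1) * (4 * real n + 3) * sqrt 2), 1 :]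
           - Polynomial.smult (32 * (real n - 1) * (40 * (real n)^2 - 12 * real n + 1))
               [: - ((4 * real n - 1) * (4 * real n + 3) * sqrt 2), 1 :]
           - Polynomial.smult (32 * real n * (40 * (real n)^2 + 4 * real n + 5))
               [: - ((4 * real n - 5) * (4 * real n - 1) * sqrt 2), 1 :])))
    \<and> (even n \<longrightarrow>
      sombor_spectrum (csc_SD_vertices n) (sd_csc_adj n) =
        replicate_mset (4*n - 2) (complex_of_real (- (2 * real n + 1) * sqrt 2))
      + replicate_mset (4*n - 3) (complex_of_real (- (4 * real n - 1) * sqrt 2))
      + replicate_mset 1 (complex_of_real (- (8 * real n - 1) * sqrt 2))
      + proots (map_poly complex_of_real
          ([: - ((8 * real n - 1) * sqrt 2), 1 :]
             * [: - ((4 * real n - 1) * (4 * real n - 3) * sqrt 2), 1 :]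
             * [: - ((2 * real n - 1) * (2 * real n + 1) * sqrt 2), 1 :] ^ 2
           - Polynomial.smult (8 * (2 * real n - 1) * (40 * (real n)^2 - 12 * real n + 1))
               ([: - ((2 * real n - 1) * (2 * real n + 1) * sqrt 2), 1 :] ^ 2)
           - Polynomial.smult (16 * real n * (34 * (real n)^2 - 6 * real n + 1))
               ([: - ((4 * real n - 3) * (4 * real n - 1) * sqrt 2), 1 :]
                * [: - ((2 * real n - 1) * (2 * real n + 1) * sqrt 2), 1 :]))))"
proof (intro conjI impI)
  assume "odd n"
  thus "sombor_spectrum (csc_SD_vertices n) (sd_csc_adj n) =
        replicate_mset 3 (complex_of_real (- (8 * real n - 1) * sqrt 2))
      + replicate_mset (4*n - 5) (complex_of_real (- (4 * real n - 1) * sqrt 2))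
      + replicate_mset (4*n - 1) (complex_of_real (- (4 * real n + 3) * sqrt 2))
      + proots (map_poly complex_of_real
          ([: - (3 * (8 * real n - 1) * sqrt 2), 1 :]
             * [: - ((4 * real n - 1) * (4 * real n - 5) * sqrt 2), 1 :]
             * [: - ((4 * real n - 1) * (4 * real n + 3) * sqrt 2), 1 :]
           - Polynomial.smult (32 * (real n - 1) * (40 * (real n)^2 - 12 * real n + 1))
               [: - ((4 * real n - 1) * (4 * real n + 3) * sqrt 2), 1 :]
           - Polynomial.smult (32 * real n * (40 * (real n)^2 + 4 * real n + 5))
               [: - ((4 * real n - 5) * (4 * real n - 1) * sqrt 2), 1 :]))"
    by (rule odd_case[OF assms])
next
  assume "even n"
  thus "sombor_spectrum (csc_SD_vertices n) (sd_csc_adj n) =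
        replicate_mset (4*n - 2) (complex_of_real (- (2 * real n + 1) * sqrt 2))
      + replicate_mset (4*n - 3) (complex_of_real (- (4 * real n - 1) * sqrt 2))
      + replicate_mset 1 (complex_of_real (- (8 * real n - 1) * sqrt 2))
      + proots (map_poly complex_of_real
          ([: - ((8 * real n - 1) * sqrt 2), 1 :]
             * [: - ((4 * real n - 1) * (4 * real n - 3) * sqrt 2), 1 :]
             * [: - ((2 * real n - 1) * (2 * real n + 1) * sqrt 2), 1 :] ^ 2
           - Polynomial.smult (8 * (2 * real n - 1) * (40 * (real n)^2 - 12 * real n + 1))
               ([: - ((2 * real n - 1) * (2 * real n + 1) * sqrt 2), 1 :] ^ 2)
           - Polynomial.smult (16 * real n * (34 * (real n)^2 - 6 * real n + 1))
               ([: - ((4 * real n - 3) * (4 * real n - 1) * sqrt 2), 1 :]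
                * [: - ((2 * real n - 1) * (2 * real n + 1) * sqrt 2), 1 :])))"
    by (rule even_case[OF assms])
qed

end
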